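(* Consider the simple regression model $y_k=\beta x_k+\varepsilon_k$ ($k\geqslant1$), $\beta\in\mathbb{R}$, where $\{x_n,n\geqslant1\}$ is an arbitrary sequence of random variables and $\{\varepsilon_n,n\geqslant1\}$ is a sequence of pairwise PQD random variables stochastically dominated by a random variable $\varepsilon$ with $\mathbb{E}\varepsilon^2<\infty$ and \[ \sum_{1\leqslant k<j<\infty}\int_j^\infty t^{-2}\left[G_{\varepsilon_k^+,\varepsilon_j^+}(\sqrt t)+G_{\varepsilon_k^-,\varepsilon_j^-}(\sqrt t)\right]\mathrm{d}t<\infty . \] Let $\mathbf{x}_n=(x_1,\ldots,x_n)'$, $\mathbf{y}_n=(y_1,\ldots,y_n)'$, $\widehat\beta_n=\big(\sum_{j=1}^n x_j^2\big)^{-1}\mathbf{x}_n'\mathbf{y}_n$, $\widehat\sigma_n^2=(\mathbf{y}_n-\mathbf{x}_n\widehat\beta_n)'(\mathbf{y}_n-\mathbf{x}_n\widehat\beta_n)/(n-1)$, $\kappa=\widehat\sigma_n^2/\widehat\beta_n^2$, and the ridge estimator $\widehat\gamma_n=\big(\sum_{j=1}^n x_j^2+\kappa\big)^{-1}\mathbf{x}_n'\mathbf{y}_n$. If $\sum_{j=1}^n x_j^2\neq0$ a.s. for some $n\geqslant1$ and $\big(\sum_{j=1}^n x_j^2\big)^{-1}=o(n^{-1})$ a.s., then $\widehat\gamma_n\to\beta$ almost surely.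
   Context: $Z^+=\max(Z,0)$, $Z^-=\max(-Z,0)$. A sequence $\{\varepsilon_n\}$ is pairwise PQD if $\mathbb{P}\{\varepsilon_k\leqslant x,\varepsilon_j\leqslant y\}-\mathbb{P}\{\varepsilon_k\leqslant x\}\mathbb{P}\{\varepsilon_j\leqslant y\}\geqslant0$ for all reals $x,y$ and all $k\neq j$. $\{\varepsilon_n\}$ is stochastically dominated by $\varepsilon$ if there is $C>0$ with $\sup_n\mathbb{P}\{|\varepsilon_n|>t\}\leqslant C\,\mathbb{P}\{|\varepsilon|>t\}$ for all $t>0$. For random variables $X,Y$ and $t>0$, $g_t(s)=\max(\min(s,t),-t)$, $\Delta_{X,Y}(x,y)=\mathbb{P}\{X\leqslant x,Y\leqslant y\}-\mathbb{P}\{X\leqslant x\}\mathbb{P}\{Y\leqslant y\}$, and $G_{X,Y}(t)=\mathrm{Cov}(g_t(X),g_t(Y))=\int_{-t}^t\int_{-t}^t\Delta_{X,Y}(x,y)\,\mathrm{d}x\,\mathrm{d}y$. *)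

theory Defs
  imports "HOL-Probability.Probability" "HOL-Library.Landau_Symbols"
begin

definition pos_part :: "real \<Rightarrow> real" where
  "pos_part z = max z 0"

definition neg_part :: "real \<Rightarrow> real" where
  "neg_part z = max (- z) 0"

definition trunc :: "real \<Rightarrow> real \<Rightarrow> real" where
  "trunc t s = max (min s t) (- t)"

definition Cov :: "'a measure \<Rightarrow> ('a \<Rightarrow> real) \<Rightarrow> ('a \<Rightarrow> real) \<Rightarrow> real" where
  "Cov M X Y = (\<integral>w. X w * Y w \<partial>M) - (\<integral>w. X w \<partial>M) * (\<integral>w. Y w \<partial>M)"

definition Gfun :: "'a measure \<Rightarrow> ('a \<Rightarrow> real) \<Rightarrow> ('a \<Rightarrow> real) \<Rightarrow> real \<Rightarrow> real" where
  "Gfun M X Y t = Cov M (\<lambda>w. trunc t (X w)) (\<lambda>w. trunc t (Y w))"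

definition pairwise_PQD :: "'a measure \<Rightarrow> (nat \<Rightarrow> 'a \<Rightarrow> real) \<Rightarrow> bool" where
  "pairwise_PQD M e \<longleftrightarrow>
     (\<forall>k j a b. 1 \<le> k \<longrightarrow> 1 \<le> j \<longrightarrow> k \<noteq> j \<longrightarrow>
        measure M {w \<in> space M. e k w \<le> a \<and> e j w \<le> b}
        - measure M {w \<in> space M. e k w \<le> a} * measure M {w \<in> space M. e j w \<le> b} \<ge> 0)"

definition stoch_dominated :: "'a measure \<Rightarrow> (nat \<Rightarrow> 'a \<Rightarrow> real) \<Rightarrow> ('a \<Rightarrow> real) \<Rightarrow> bool" where
  "stoch_dominated M e d \<longleftrightarrow>
     (\<exists>C>0. \<forall>n t. 1 \<le> n \<longrightarrow> t > 0 \<longrightarrow>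
        measure M {w \<in> space M. \<bar>e n w\<bar> > t} \<le> C * measure M {w \<in> space M. \<bar>d w\<bar> > t})"

definition Sxx :: "(nat \<Rightarrow> 'a \<Rightarrow> real) \<Rightarrow> nat \<Rightarrow> 'a \<Rightarrow> real" where
  "Sxx x n w = (\<Sum>j = 1..n. (x j w)\<^sup>2)"

definition Sxy :: "(nat \<Rightarrow> 'a \<Rightarrow> real) \<Rightarrow> (nat \<Rightarrow> 'a \<Rightarrow> real) \<Rightarrow> nat \<Rightarrow> 'a \<Rightarrow> real" where
  "Sxy x y n w = (\<Sum>j = 1..n. x j w * y j w)"

definition beta_hat :: "(nat \<Rightarrow> 'a \<Rightarrow> real) \<Rightarrow> (nat \<Rightarrow> 'a \<Rightarrow> real) \<Rightarrow> nat \<Rightarrow> 'a \<Rightarrow> real" where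
  "beta_hat x y n w = inverse (Sxx x n w) * Sxy x y n w"

definition sigma2_hat :: "(nat \<Rightarrow> 'a \<Rightarrow> real) \<Rightarrow> (nat \<Rightarrow> 'a \<Rightarrow> real) \<Rightarrow> nat \<Rightarrow> 'a \<Rightarrow> real" where
  "sigma2_hat x y n w =
     (\<Sum>j = 1..n. (y j w - x j w * beta_hat x y n w)\<^sup>2) / (real n - 1)"

definition gamma_hat :: "(nat \<Rightarrow> 'a \<Rightarrow> real) \<Rightarrow> (nat \<Rightarrow> 'a \<Rightarrow> real) \<Rightarrow> nat \<Rightarrow> 'a \<Rightarrow> real" where
  "gamma_hat x y n w =
     (let \<kappa> = sigma2_hat x y n w / (beta_hat x y n w)\<^sup>2
      in inverse (Sxx x n w + \<kappa>) * Sxy x y n w)"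

end

theory Submission
  imports Defs
begin

definition NR :: "real \<Rightarrow> real measure" where
  "NR R = density lborel (\<lambda>x. ennreal (indicator {0..R} x))"

lemma NR_space[simp]: "space (NR R) = UNIV" by (simp add: NR_def)
lemma NR_sets[simp]: "sets (NR R) = sets borel" by (simp add: NR_def)
lemma NR_meas_iff: "f \<in> borel_measurable (NR R) \<longleftrightarrow> f \<in> borel_measurable borel"
  using measurable_cong_sets[of "NR R" borel borel borel] by (metis NR_sets)

lemma NR_finite: "finite_measure (NR R)"
proof (rule finite_measureI)
  have "emeasure (NR R) (space (NR R)) = emeasure lborel {0..R}"
    unfolding NR_def by (simp add: emeasure_density ennreal_indicator)
  then show "emeasure (NR R) (space (NR R)) \<noteq> \<infinity>" by (cases "0 \<le> R") auto
qed

lemma NR_integral: "(f::real\<Rightarrow>real) \<in> borel_measurable borel \<Longrightarrow>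
   (\<integral>x. f x \<partial>NR R) = (\<integral>x. indicator {0..R} x * f x \<partial>lborel)"
  unfolding NR_def
  using integral_density[of f lborel "indicator {0..R}"]
  apply (auto simp: mult.commute)
  done

lemma NR_prod_meas:
  "f \<in> borel_measurable (NR R \<Otimes>\<^sub>M M) \<longleftrightarrow> f \<in> borel_measurable (borel \<Otimes>\<^sub>M M)"
  using measurable_cong_sets[of "NR R \<Otimes>\<^sub>M M" "borel \<Otimes>\<^sub>M M" borel borel]
    sets_pair_measure_cong[of "NR R" borel M M] by auto

lemma swap_int:
  fixes f :: "real \<Rightarrow> 'a \<Rightarrow> real"
  assumes "prob_space M" and f: "case_prod f \<in> borel_measurable (NR R \<Otimes>\<^sub>M M)"
    and B: "\<And>s w. \<bar>f s w\<bar> \<le> B"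
  shows "(\<integral>w. (\<integral>s. f s w \<partial>NR R) \<partial>M) = (\<integral>s. (\<integral>w. f s w \<partial>M) \<partial>NR R)"
proof -
  interpret P: prob_space M by fact
  interpret N: finite_measure "NR R" by (rule NR_finite)
  interpret NM: pair_sigma_finite "NR R" M ..
  interpret F: finite_measure "NR R \<Otimes>\<^sub>M M"
    by (rule finite_measure_pair_measure) (simp add: NR_finite, unfold_locales)
  have "integrable (NR R \<Otimes>\<^sub>M M) (case_prod f)"
    apply (rule F.integrable_const_bound[where B=B])
    using B f by auto
  then show ?thesis by (rule NM.Fubini_integral)
qed

lemma NR_int_bound:
  fixes f :: "real \<Rightarrow> real"
  assumes "\<And>s. \<bar>f s\<bar> \<le> B"
  shows "\<bar>\<integral>s. f s \<partial>NR R\<bar> \<le> B * measure (NR R) UNIV"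
proof (cases "integrable (NR R) f")
  case True
  interpret N: finite_measure "NR R" by (rule NR_finite)
  have "\<bar>\<integral>s. f s \<partial>NR R\<bar> \<le> (\<integral>s. \<bar>f s\<bar> \<partial>NR R)"
    by (rule integral_abs_bound)
  also have "\<dots> \<le> (\<integral>s. B \<partial>NR R)"
    using True assms by (intro integral_mono) auto
  also have "\<dots> = B * measure (NR R) UNIV" by simp
  finally show ?thesis .
next
  case False
  then show ?thesis using assms[of 0] by (simp add: not_integrable_integral_eq)
qed

lemma abs_mult_le1: "\<bar>x\<bar> \<le> (A::real) \<Longrightarrow> \<bar>y\<bar> \<le> 1 \<Longrightarrow> \<bar>x * y\<bar> \<le> A"
proof -
  assume h: "\<bar>x\<bar> \<le> A" "\<bar>y\<bar> \<le> 1"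
  have "\<bar>x * y\<bar> = \<bar>x\<bar> * \<bar>y\<bar>" by (simp add: abs_mult)
  also have "\<dots> \<le> \<bar>x\<bar> * 1" by (rule mult_left_mono) (use h in auto)
  finally show ?thesis using h by simp
qed

lemma prob_int_bound:
  fixes f :: "'a \<Rightarrow> real"
  assumes "prob_space M" "\<And>w. \<bar>f w\<bar> \<le> C"
  shows "\<bar>\<integral>w. f w \<partial>M\<bar> \<le> C"
proof (cases "integrable M f")
  case True
  interpret P: prob_space M by fact
  have "\<bar>\<integral>s. f s \<partial>M\<bar> \<le> (\<integral>s. \<bar>f s\<bar> \<partial>M)"
    by (rule integral_abs_bound)
  also have "\<dots> \<le> (\<integral>s. C \<partial>M)"
    using True assms by (intro integral_mono) auto
  also have "\<dots> = C" by (simp add: P.prob_space)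
  finally show ?thesis .
next
  case False
  then show ?thesis using assms(2)[of undefined] by (simp add: not_integrable_integral_eq)
qed

lemma NR_integrable:
  fixes f :: "real \<Rightarrow> real"
  assumes "f \<in> borel_measurable borel" "\<And>s. \<bar>f s\<bar> \<le> C"
  shows "integrable (NR R) f"
proof -
  interpret N: finite_measure "NR R" by (rule NR_finite)
  show ?thesis
    apply (rule N.integrable_const_bound[where B=C])
    using assms NR_meas_iff by auto
qed

lemma abs_mult3_le: "\<bar>x\<bar> \<le> (A::real) \<Longrightarrow> \<bar>y\<bar> \<le> 1 \<Longrightarrow> \<bar>z\<bar> \<le> C \<Longrightarrow> \<bar>x * y * z\<bar> \<le> A * C"
proof -
  assume h: "\<bar>x\<bar> \<le> A" "\<bar>y\<bar> \<le> 1" "\<bar>z\<bar> \<le> C"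
  have "\<bar>x * y\<bar> \<le> A" by (rule abs_mult_le1) (use h in auto)
  then have "\<bar>x * y\<bar> * \<bar>z\<bar> \<le> A * C" by (rule mult_mono) (use h in auto)
  then show ?thesis by (simp add: abs_mult)
qed

lemma abs_mult2_le: "\<bar>x\<bar> \<le> (A::real) \<Longrightarrow> \<bar>y\<bar> \<le> C \<Longrightarrow> \<bar>x * y\<bar> \<le> A * C"
  by (simp add: abs_mult mult_mono')

lemma cov_repr:
  fixes M :: "'a measure" and a b :: "real \<Rightarrow> real" and I J :: "real \<Rightarrow> 'a \<Rightarrow> real"
  assumes M: "prob_space M"
    and am[measurable]: "a \<in> borel_measurable borel" and ab: "\<And>s. \<bar>a s\<bar> \<le> A"
    and bm[measurable]: "b \<in> borel_measurable borel" and bb: "\<And>s. \<bar>b s\<bar> \<le> B"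
    and Im: "case_prod I \<in> borel_measurable (borel \<Otimes>\<^sub>M M)" and Ib: "\<And>s w. \<bar>I s w\<bar> \<le> 1"
    and Jm: "case_prod J \<in> borel_measurable (borel \<Otimes>\<^sub>M M)" and Jb: "\<And>s w. \<bar>J s w\<bar> \<le> 1"
  shows "Cov M (\<lambda>w. \<integral>s. a s * I s w \<partial>NR R) (\<lambda>w. \<integral>r. b r * J r w \<partial>NR R)
     = (\<integral>s. (\<integral>r. a s * b r * ((\<integral>w. I s w * J r w \<partial>M) - (\<integral>w. I s w \<partial>M) * (\<integral>w. J r w \<partial>M)) \<partial>NR R) \<partial>NR R)"
    and "integrable (NR R) (\<lambda>s. (\<integral>r. a s * b r * ((\<integral>w. I s w * J r w \<partial>M) - (\<integral>w. I s w \<partial>M) * (\<integral>w. J r w \<partial>M)) \<partial>NR R))"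
    and "\<And>s. integrable (NR R) (\<lambda>r. a s * b r * ((\<integral>w. I s w * J r w \<partial>M) - (\<integral>w. I s w \<partial>M) * (\<integral>w. J r w \<partial>M)))"
proof -
  interpret P: prob_space M by fact
  interpret N: finite_measure "NR R" by (rule NR_finite)
  define K where "K = measure (NR R) UNIV"
  have K0: "0 \<le> K" unfolding K_def by simp
  define X where "X w = (\<integral>s. a s * I s w \<partial>NR R)" for w
  define Y where "Y w = (\<integral>r. b r * J r w \<partial>NR R)" for w
  have Im'[measurable]: "case_prod I \<in> borel_measurable (NR R \<Otimes>\<^sub>M M)" using Im NR_prod_meas by blast
  have Jm'[measurable]: "case_prod J \<in> borel_measurable (NR R \<Otimes>\<^sub>M M)" using Jm NR_prod_meas by blast
  have am'[measurable]: "a \<in> borel_measurable (NR R)" "b \<in> borel_measurable (NR R)"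
    using am bm by (simp_all only: NR_meas_iff)
  have Xm[measurable]: "X \<in> borel_measurable M"
    unfolding X_def by (rule N.borel_measurable_lebesgue_integral) measurable
  have Ym[measurable]: "Y \<in> borel_measurable M"
    unfolding Y_def by (rule N.borel_measurable_lebesgue_integral) measurable
  have Xb: "\<bar>X w\<bar> \<le> A * K" for w
    unfolding X_def K_def by (rule NR_int_bound) (use ab Ib abs_mult_le1 in blast)
  have Yb: "\<bar>Y w\<bar> \<le> B * K" for w
    unfolding Y_def K_def by (rule NR_int_bound) (use bb Jb abs_mult_le1 in blast)
  define E1 where "E1 s = (\<integral>w. I s w \<partial>M)" for s
  define E2 where "E2 r = (\<integral>w. J r w \<partial>M)" for r
  define E12 where "E12 s r = (\<integral>w. I s w * J r w \<partial>M)" for s r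
  define F where "F s = (\<integral>w. I s w * Y w \<partial>M)" for s
  have A0: "0 \<le> A" using ab[of 0] by simp
  have B0: "0 \<le> B" using bb[of 0] by simp
  have E1m[measurable]: "E1 \<in> borel_measurable borel"
    unfolding E1_def by (rule P.borel_measurable_lebesgue_integral) (use Im in simp)
  have E2m[measurable]: "E2 \<in> borel_measurable borel"
    unfolding E2_def by (rule P.borel_measurable_lebesgue_integral) (use Jm in simp)
  have Im2[measurable]: "case_prod I \<in> borel_measurable (borel \<Otimes>\<^sub>M M)" by (rule Im)
  have Jm2[measurable]: "case_prod J \<in> borel_measurable (borel \<Otimes>\<^sub>M M)" by (rule Jm)
  have E12m[measurable]: "(\<lambda>r. E12 s r) \<in> borel_measurable borel" for s
    unfolding E12_def by (rule P.borel_measurable_lebesgue_integral) measurable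
  have Fm[measurable]: "F \<in> borel_measurable borel"
    unfolding F_def by (rule P.borel_measurable_lebesgue_integral) measurable
  have E1b: "\<bar>E1 s\<bar> \<le> 1" for s unfolding E1_def by (rule prob_int_bound[OF M Ib])
  have E2b: "\<bar>E2 s\<bar> \<le> 1" for s unfolding E2_def by (rule prob_int_bound[OF M Jb])
  have E12b: "\<bar>E12 s r\<bar> \<le> 1" for s r unfolding E12_def
    by (rule prob_int_bound[OF M]) (use Ib Jb abs_mult_le1 in blast)
  have Fb: "\<bar>F s\<bar> \<le> B * K" for s unfolding F_def
    by (rule prob_int_bound[OF M]) (metis Ib Yb abs_mult_le1 mult.commute)
  define EY where "EY = (\<integral>w. Y w \<partial>M)"
  have EYb: "\<bar>EY\<bar> \<le> B * K" unfolding EY_def by (rule prob_int_bound[OF M Yb])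
  have Ymeas: "(\<lambda>p. Y (snd p)) \<in> borel_measurable (NR R \<Otimes>\<^sub>M M)" by measurable
  have eXY: "(\<integral>w. X w * Y w \<partial>M) = (\<integral>s. a s * F s \<partial>NR R)"
  proof -
    have "(\<integral>w. X w * Y w \<partial>M) = (\<integral>w. (\<integral>s. a s * I s w * Y w \<partial>NR R) \<partial>M)"
      unfolding X_def by (simp add: integral_mult_left_zero)
    also have "\<dots> = (\<integral>s. (\<integral>w. a s * I s w * Y w \<partial>M) \<partial>NR R)"
    proof (rule swap_int[OF M, where B="A * (B * K)"])
      show "(\<lambda>(s, w). a s * I s w * Y w) \<in> borel_measurable (NR R \<Otimes>\<^sub>M M)"
        using Ymeas by measurable
      show "\<bar>a s * I s w * Y w\<bar> \<le> A * (B * K)" for s w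
        using abs_mult3_le[OF ab[of s] Ib[of s w] Yb[of w]] .
    qed
    also have "\<dots> = (\<integral>s. a s * F s \<partial>NR R)"
      unfolding F_def by (simp add: mult.assoc)
    finally show ?thesis .
  qed
  have Feq: "F s = (\<integral>r. b r * E12 s r \<partial>NR R)" for s
  proof -
    have "F s = (\<integral>w. (\<integral>r. I s w * b r * J r w \<partial>NR R) \<partial>M)"
      unfolding F_def Y_def by (simp add: mult.assoc)
    also have "\<dots> = (\<integral>r. (\<integral>w. I s w * b r * J r w \<partial>M) \<partial>NR R)"
    proof (rule swap_int[OF M, where B="B * 1"])
      show "(\<lambda>(r, w). I s w * b r * J r w) \<in> borel_measurable (NR R \<Otimes>\<^sub>M M)"
        by measurable
      show "\<bar>I s w * b r * J r w\<bar> \<le> B * 1" for r w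
        using abs_mult3_le[OF bb Ib Jb, of r s w r] by (simp add: ac_simps)
    qed
    also have "\<dots> = (\<integral>r. b r * E12 s r \<partial>NR R)"
      unfolding E12_def by (simp add: ac_simps)
    finally show ?thesis .
  qed
  have eX: "(\<integral>w. X w \<partial>M) = (\<integral>s. a s * E1 s \<partial>NR R)"
    unfolding X_def E1_def
    by (rule trans[OF swap_int[OF M, where B=A]]) (use abs_mult_le1[OF ab Ib] in auto)
  have eY: "EY = (\<integral>r. b r * E2 r \<partial>NR R)"
    unfolding EY_def Y_def E2_def
    by (rule trans[OF swap_int[OF M, where B=B]]) (use abs_mult_le1[OF bb Jb] in auto)
  have i1: "integrable (NR R) (\<lambda>r. a s * (b r * E12 s r))" for s
  proof -
    have [measurable]: "(\<lambda>r. E12 s r) \<in> borel_measurable borel" by (rule E12m)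
    show ?thesis
      by (rule NR_integrable[where C="A * B"]) (measurable, rule abs_mult2_le[OF ab abs_mult_le1[OF bb E12b]])
  qed
  have i2: "integrable (NR R) (\<lambda>r. a s * E1 s * (b r * E2 r))" for s
      by (rule NR_integrable[where C="A * B"]) (measurable, rule abs_mult2_le[OF abs_mult_le1[OF ab E1b] abs_mult_le1[OF bb E2b]])
  have inteq: "(\<lambda>r. a s * b r * (E12 s r - E1 s * E2 r)) = (\<lambda>r. a s * (b r * E12 s r) - a s * E1 s * (b r * E2 r))" for s
    by (auto simp: algebra_simps)
  have iint: "integrable (NR R) (\<lambda>r. a s * b r * (E12 s r - E1 s * E2 r))" for s
    unfolding inteq by (rule Bochner_Integration.integrable_diff[OF i1 i2])
  have inner: "(\<integral>r. a s * b r * (E12 s r - E1 s * E2 r) \<partial>NR R) = a s * F s - a s * E1 s * EY" for s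
  proof -
        have "(\<integral>r. a s * b r * (E12 s r - E1 s * E2 r) \<partial>NR R)
        = (\<integral>r. a s * (b r * E12 s r) - a s * E1 s * (b r * E2 r) \<partial>NR R)"
      by (rule Bochner_Integration.integral_cong) (auto simp: algebra_simps)
    also have "\<dots> = (\<integral>r. a s * (b r * E12 s r) \<partial>NR R) - (\<integral>r. a s * E1 s * (b r * E2 r) \<partial>NR R)"
      by (rule Bochner_Integration.integral_diff[OF i1 i2])
    also have "\<dots> = a s * F s - a s * E1 s * EY"
      by (simp add: Feq eY)
    finally show ?thesis .
  qed
  have j1: "integrable (NR R) (\<lambda>s. a s * F s)"
    by (rule NR_integrable[where C="A * (B * K)"]) (measurable, rule abs_mult2_le[OF ab Fb])
  have j2: "integrable (NR R) (\<lambda>s. a s * E1 s * EY)"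
    by (rule NR_integrable[where C="A * (B * K)"]) (measurable, rule abs_mult3_le[OF ab E1b EYb])
  have "(\<integral>s. (\<integral>r. a s * b r * (E12 s r - E1 s * E2 r) \<partial>NR R) \<partial>NR R)
      = (\<integral>s. a s * F s - a s * E1 s * EY \<partial>NR R)"
    by (simp add: inner)
  also have "\<dots> = (\<integral>s. a s * F s \<partial>NR R) - (\<integral>s. a s * E1 s * EY \<partial>NR R)"
    by (rule Bochner_Integration.integral_diff[OF j1 j2])
  also have "\<dots> = Cov M X Y"
    unfolding Cov_def eXY eX by (simp add: EY_def)
  finally show "Cov M (\<lambda>w. \<integral>s. a s * I s w \<partial>NR R) (\<lambda>w. \<integral>r. b r * J r w \<partial>NR R)
     = (\<integral>s. (\<integral>r. a s * b r * ((\<integral>w. I s w * J r w \<partial>M) - (\<integral>w. I s w \<partial>M) * (\<integral>w. J r w \<partial>M)) \<partial>NR R) \<partial>NR R)"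
    unfolding X_def Y_def E12_def E1_def E2_def by simp
  have "integrable (NR R) (\<lambda>s. a s * F s - a s * E1 s * EY)"
    by (rule Bochner_Integration.integrable_diff[OF j1 j2])
  then have "integrable (NR R) (\<lambda>s. (\<integral>r. a s * b r * (E12 s r - E1 s * E2 r) \<partial>NR R))"
    by (simp add: inner)
  then show "integrable (NR R) (\<lambda>s. (\<integral>r. a s * b r * ((\<integral>w. I s w * J r w \<partial>M) - (\<integral>w. I s w \<partial>M) * (\<integral>w. J r w \<partial>M)) \<partial>NR R))"
    unfolding E12_def E1_def E2_def by simp
  show "integrable (NR R) (\<lambda>r. a s * b r * ((\<integral>w. I s w * J r w \<partial>M) - (\<integral>w. I s w \<partial>M) * (\<integral>w. J r w \<partial>M)))" for s
    using iint[of s] unfolding E12_def E1_def E2_def by simp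
qed

lemma phi_eval_gen:
  fixes T R u :: real and k :: nat and P :: "real \<Rightarrow> bool"
  assumes T: "0 \<le> T" "T \<le> R" and P: "\<And>s. s \<noteq> u \<Longrightarrow> P s \<longleftrightarrow> s < u"
    and Pm: "{s. P s} \<in> sets borel"
  shows "(\<integral>s. indicator {0..T} s * s^k * indicator {s. P s} s \<partial>NR R) = (max 0 (min u T))^(k+1)/(k+1)"
proof -
  define c where "c = max 0 (min u T)"
  have c0: "0 \<le> c" unfolding c_def by simp
  have Pm'[measurable]: "(indicator {s. P s} :: real \<Rightarrow> real) \<in> borel_measurable borel"
    using Pm by (rule borel_measurable_indicator)
  have "(\<integral>s. indicator {0..T} s * s^k * indicator {s. P s} s \<partial>NR R)
      = (\<integral>s. indicator {0..R} s * (indicator {0..T} s * s^k * indicator {s. P s} s) \<partial>lborel)"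
    by (rule NR_integral) measurable
  also have "\<dots> = (\<integral>s. s^k * indicator {0..c} s \<partial>lborel)"
  proof (rule integral_cong_AE)
    show "AE s in lborel. indicator {0..R} s * (indicator {0..T} s * s^k * indicator {s. P s} s) = s^k * indicator {0..c} s"
      using AE_lborel_singleton[of u] AE_lborel_singleton[of 0]
    proof eventually_elim
      case (elim s)
      have Ps: "P s \<longleftrightarrow> s < u" using P elim by auto
      consider "s < 0" | "0 < s" "s \<le> T" | "T < s" using elim by linarith
      then show ?case
      proof cases
        case 1
        then show ?thesis using c0 by (simp add: indicator_def)
      next
        case 2
        have "s \<le> c \<longleftrightarrow> s < u" using 2 elim unfolding c_def by auto
        then show ?thesis using 2 T Ps by (simp add: indicator_def)
      next
        case 3
        have "c \<le> T" unfolding c_def using T by simp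
        then show ?thesis using 3 by (simp add: indicator_def)
      qed
    qed
  next
    show "(\<lambda>s. indicator {0..R} s * (indicator {0..T} s * s^k * indicator {s. P s} s)) \<in> borel_measurable lborel"
      unfolding measurable_lborel1 by measurable
    show "(\<lambda>s. s^k * indicator {0..c} s) \<in> borel_measurable lborel"
      unfolding measurable_lborel1 by measurable
  qed
  also have "\<dots> = c^(k+1)/(k+1)"
    using integral_power[OF c0, of k] by simp
  finally show ?thesis unfolding c_def .
qed

lemma cov_mono:
  fixes M :: "'a measure" and a b a' b' :: "real \<Rightarrow> real" and I J :: "real \<Rightarrow> 'a \<Rightarrow> real"
  assumes M: "prob_space M"
    and am: "a \<in> borel_measurable borel" and ab: "\<And>s. \<bar>a s\<bar> \<le> A"
    and bm: "b \<in> borel_measurable borel" and bb: "\<And>s. \<bar>b s\<bar> \<le> B"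
    and am': "a' \<in> borel_measurable borel" and ab': "\<And>s. \<bar>a' s\<bar> \<le> A'"
    and bm': "b' \<in> borel_measurable borel" and bb': "\<And>s. \<bar>b' s\<bar> \<le> B'"
    and Im: "case_prod I \<in> borel_measurable (borel \<Otimes>\<^sub>M M)" and Ib: "\<And>s w. \<bar>I s w\<bar> \<le> 1"
    and Jm: "case_prod J \<in> borel_measurable (borel \<Otimes>\<^sub>M M)" and Jb: "\<And>s w. \<bar>J s w\<bar> \<le> 1"
    and le: "\<And>s r. a s * b r * ((\<integral>w. I s w * J r w \<partial>M) - (\<integral>w. I s w \<partial>M) * (\<integral>w. J r w \<partial>M))
              \<le> a' s * b' r * ((\<integral>w. I s w * J r w \<partial>M) - (\<integral>w. I s w \<partial>M) * (\<integral>w. J r w \<partial>M))"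
  shows "Cov M (\<lambda>w. \<integral>s. a s * I s w \<partial>NR R) (\<lambda>w. \<integral>r. b r * J r w \<partial>NR R)
      \<le> Cov M (\<lambda>w. \<integral>s. a' s * I s w \<partial>NR R) (\<lambda>w. \<integral>r. b' r * J r w \<partial>NR R)"
proof -
  note c1 = cov_repr[OF M am ab bm bb Im Ib Jm Jb, of R]
  note c2 = cov_repr[OF M am' ab' bm' bb' Im Ib Jm Jb, of R]
  show ?thesis
    unfolding c1(1) c2(1)
    by (intro integral_mono c1(2) c2(2) c1(3) c2(3) le)
qed

lemma wbound: "0 \<le> T \<Longrightarrow> \<bar>indicator {0..T} s * s^n\<bar> \<le> (T::real)^n"
  by (auto simp: indicator_def power_mono)

lemma wmeas: "(\<lambda>s. indicator {0..T} s * s^n :: real) \<in> borel_measurable borel"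
  by measurable

lemma wmeas': "(\<lambda>s. c * (indicator {0..T} s * s^n) :: real) \<in> borel_measurable borel"
  by measurable

lemma cov_scale: "Cov M (\<lambda>w. c * X w) (\<lambda>w. d * Y w) = c * d * Cov M X Y"
  unfolding Cov_def
proof -
  have "(\<lambda>w. c * X w * (d * Y w)) = (\<lambda>w. (c * d) * (X w * Y w))" by (auto simp: ac_simps)
  then show "(\<integral>w. c * X w * (d * Y w) \<partial>M) - (\<integral>w. c * X w \<partial>M) * (\<integral>w. d * Y w \<partial>M) =
    c * d * ((\<integral>w. X w * Y w \<partial>M) - (\<integral>w. X w \<partial>M) * (\<integral>w. Y w \<partial>M))"
    by (simp add: algebra_simps)
qed

lemma hoeff_bounds:
  fixes M :: "'a measure" and Uk Uj :: "'a \<Rightarrow> real" and Ik Ij :: "real \<Rightarrow> 'a \<Rightarrow> real"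
  assumes M: "prob_space M"
    and Ikm: "case_prod Ik \<in> borel_measurable (borel \<Otimes>\<^sub>M M)" and Ikb: "\<And>s w. \<bar>Ik s w\<bar> \<le> 1"
    and Ijm: "case_prod Ij \<in> borel_measurable (borel \<Otimes>\<^sub>M M)" and Ijb: "\<And>s w. \<bar>Ij s w\<bar> \<le> 1"
    and phik: "\<And>R T n w. 0 \<le> T \<Longrightarrow> T \<le> R \<Longrightarrow>
        (\<integral>s. indicator {0..T} s * s^n * Ik s w \<partial>NR R) = (min (Uk w) T)^(n+1)/(n+1)"
    and phij: "\<And>R T n w. 0 \<le> T \<Longrightarrow> T \<le> R \<Longrightarrow>
        (\<integral>s. indicator {0..T} s * s^n * Ij s w \<partial>NR R) = (min (Uj w) T)^(n+1)/(n+1)"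
    and Dnn: "\<And>s r. 0 \<le> s \<Longrightarrow> 0 \<le> r \<Longrightarrow>
        0 \<le> (\<integral>w. Ik s w * Ij r w \<partial>M) - (\<integral>w. Ik s w \<partial>M) * (\<integral>w. Ij r w \<partial>M)"
  shows hb_sq: "\<And>T. 0 \<le> T \<Longrightarrow> Cov M (\<lambda>w. (min (Uk w) T)^2) (\<lambda>w. (min (Uj w) T)^2)
             \<le> 4 * T^2 * Cov M (\<lambda>w. min (Uk w) T) (\<lambda>w. min (Uj w) T)"
    and hb_mono: "\<And>T T'. 0 \<le> T \<Longrightarrow> T \<le> T' \<Longrightarrow> Cov M (\<lambda>w. min (Uk w) T) (\<lambda>w. min (Uj w) T)
             \<le> Cov M (\<lambda>w. min (Uk w) T') (\<lambda>w. min (Uj w) T')"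
    and hb_nn: "\<And>T. 0 \<le> T \<Longrightarrow> 0 \<le> Cov M (\<lambda>w. min (Uk w) T) (\<lambda>w. min (Uj w) T)"
proof -
  define D where "D s r = (\<integral>w. Ik s w * Ij r w \<partial>M) - (\<integral>w. Ik s w \<partial>M) * (\<integral>w. Ij r w \<partial>M)" for s r
  have m1: "(\<lambda>w. min (Uk w) T) = (\<lambda>w. \<integral>s. indicator {0..T} s * s^0 * Ik s w \<partial>NR R)"
    if "0 \<le> T" "T \<le> R" for T R using phik[OF that, of 0] by simp
  have m2: "(\<lambda>w. min (Uj w) T) = (\<lambda>w. \<integral>s. indicator {0..T} s * s^0 * Ij s w \<partial>NR R)"
    if "0 \<le> T" "T \<le> R" for T R using phij[OF that, of 0] by simp
  show "0 \<le> Cov M (\<lambda>w. min (Uk w) T) (\<lambda>w. min (Uj w) T)" if T: "0 \<le> T" for T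
  proof -
    have "Cov M (\<lambda>w. \<integral>s. 0 * Ik s w \<partial>NR T) (\<lambda>w. \<integral>r. 0 * Ij r w \<partial>NR T)
       \<le> Cov M (\<lambda>w. \<integral>s. indicator {0..T} s * s^0 * Ik s w \<partial>NR T) (\<lambda>w. \<integral>r. indicator {0..T} r * r^0 * Ij r w \<partial>NR T)"
      apply (rule cov_mono[OF M _ _ _ _ wmeas wbound[OF T] wmeas wbound[OF T] Ikm Ikb Ijm Ijb, where A=0 and B=0])
      using Dnn by (auto simp: indicator_def)
    then show ?thesis unfolding m1[OF T order.refl] m2[OF T order.refl] by (simp add: Cov_def)
  qed
  show "Cov M (\<lambda>w. min (Uk w) T) (\<lambda>w. min (Uj w) T) \<le> Cov M (\<lambda>w. min (Uk w) T') (\<lambda>w. min (Uj w) T')"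
    if T: "0 \<le> T" "T \<le> T'" for T T'
  proof -
    have T': "0 \<le> T'" using T by simp
    have "Cov M (\<lambda>w. \<integral>s. indicator {0..T} s * s^0 * Ik s w \<partial>NR T') (\<lambda>w. \<integral>r. indicator {0..T} r * r^0 * Ij r w \<partial>NR T')
       \<le> Cov M (\<lambda>w. \<integral>s. indicator {0..T'} s * s^0 * Ik s w \<partial>NR T') (\<lambda>w. \<integral>r. indicator {0..T'} r * r^0 * Ij r w \<partial>NR T')"
      apply (rule cov_mono[OF M wmeas wbound[OF T(1)] wmeas wbound[OF T(1)] wmeas wbound[OF T'] wmeas wbound[OF T'] Ikm Ikb Ijm Ijb])
      using Dnn T by (auto simp: indicator_def)
    then show ?thesis unfolding m1[OF T] m2[OF T] m1[OF T' order.refl] m2[OF T' order.refl] .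
  qed
  show "Cov M (\<lambda>w. (min (Uk w) T)^2) (\<lambda>w. (min (Uj w) T)^2)
             \<le> 4 * T^2 * Cov M (\<lambda>w. min (Uk w) T) (\<lambda>w. min (Uj w) T)" if T: "0 \<le> T" for T
  proof -
    have q1: "(\<lambda>w. (min (Uk w) T)^2) = (\<lambda>w. 2 * (\<integral>s. indicator {0..T} s * s^1 * Ik s w \<partial>NR T))"
    proof (rule ext)
      fix w show "(min (Uk w) T)^2 = 2 * (\<integral>s. indicator {0..T} s * s^1 * Ik s w \<partial>NR T)"
        using phik[OF T order.refl, of 1 w] by (simp add: power2_eq_square mult.commute)
    qed
    have q2: "(\<lambda>w. (min (Uj w) T)^2) = (\<lambda>w. 2 * (\<integral>s. indicator {0..T} s * s^1 * Ij s w \<partial>NR T))"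
    proof (rule ext)
      fix w show "(min (Uj w) T)^2 = 2 * (\<integral>s. indicator {0..T} s * s^1 * Ij s w \<partial>NR T)"
        using phij[OF T order.refl, of 1 w] by (simp add: power2_eq_square mult.commute)
    qed
    have r1: "(\<lambda>w. \<integral>s. T * (indicator {0..T} s * s^0) * Ik s w \<partial>NR T) = (\<lambda>w. T * min (Uk w) T)"
      using phik[OF T order.refl, of 0] by (simp add: mult.assoc)
    have r2: "(\<lambda>w. \<integral>s. T * (indicator {0..T} s * s^0) * Ij s w \<partial>NR T) = (\<lambda>w. T * min (Uj w) T)"
      using phij[OF T order.refl, of 0] by (simp add: mult.assoc)
    have "Cov M (\<lambda>w. \<integral>s. indicator {0..T} s * s^1 * Ik s w \<partial>NR T) (\<lambda>w. \<integral>r. indicator {0..T} r * r^1 * Ij r w \<partial>NR T)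
       \<le> Cov M (\<lambda>w. \<integral>s. T * (indicator {0..T} s * s^0) * Ik s w \<partial>NR T) (\<lambda>w. \<integral>r. T * (indicator {0..T} r * r^0) * Ij r w \<partial>NR T)"
    proof (rule cov_mono[OF M wmeas wbound[OF T] wmeas wbound[OF T] wmeas' _ wmeas' _ Ikm Ikb Ijm Ijb], unfold D_def[symmetric])
      show "\<bar>T * (indicator {0..T} s * s ^ 0)\<bar> \<le> T" for s using T by (auto simp: indicator_def)
      show "\<bar>T * (indicator {0..T} s * s ^ 0)\<bar> \<le> T" for s using T by (auto simp: indicator_def)
      fix s r
      show "indicator {0..T} s * s ^ 1 * (indicator {0..T} r * r ^ 1) * D s r
         \<le> T * (indicator {0..T} s * s ^ 0) * (T * (indicator {0..T} r * r ^ 0)) * D s r"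
      proof (cases "s \<in> {0..T} \<and> r \<in> {0..T}")
        case True
        then have "s * r \<le> T * T" by (auto intro: mult_mono)
        moreover have "0 \<le> D s r" using Dnn True unfolding D_def by auto
        ultimately show ?thesis using True by (simp add: mult_right_mono)
      next
        case False
        then show ?thesis by (auto simp: indicator_def)
      qed
    qed
    then show ?thesis unfolding q1 q2 cov_scale r1 r2 by (simp add: power2_eq_square)
  qed
qed

lemma phi_lt: "0 \<le> T \<Longrightarrow> T \<le> R \<Longrightarrow> 0 \<le> u \<Longrightarrow>
  (\<integral>s. indicator {0..T} s * s^n * indicator {s. s < u} s \<partial>NR R) = (min u T)^(n+1)/(n+1)"
  using phi_eval_gen[of T R u "\<lambda>s. s < u" n] by simp

lemma phi_le: "0 \<le> T \<Longrightarrow> T \<le> R \<Longrightarrow> 0 \<le> u \<Longrightarrow>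
  (\<integral>s. indicator {0..T} s * s^n * indicator {s. s \<le> u} s \<partial>NR R) = (min u T)^(n+1)/(n+1)"
proof -
  assume h: "0 \<le> T" "T \<le> R" "0 \<le> u"
  have "\<And>s. s \<noteq> u \<Longrightarrow> (s \<le> u) = (s < u)" by auto
  then show ?thesis using phi_eval_gen[of T R u "\<lambda>s. s \<le> u" n] h by simp
qed

lemma ind_lt_meas: "(U :: 'a \<Rightarrow> real) \<in> borel_measurable M \<Longrightarrow>
   (\<lambda>(s, w). indicator {s. s < U w} s :: real) \<in> borel_measurable (borel \<Otimes>\<^sub>M M)"
proof -
  assume [measurable]: "U \<in> borel_measurable M"
  have [measurable]: "{x \<in> space (borel \<Otimes>\<^sub>M M). fst x < U (snd x)} \<in> sets (borel \<Otimes>\<^sub>M M)"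
    by (rule borel_measurable_less) measurable
  have "(\<lambda>(s, w). indicator {s. s < U w} s :: real) = (\<lambda>p. if fst p < U (snd p) then 1 else 0)"
    by (auto simp: indicator_def split: prod.splits)
  also have "\<dots> \<in> borel_measurable (borel \<Otimes>\<^sub>M M)" unfolding pred_def by measurable
  finally show ?thesis .
qed

lemma ind_le_meas: "(U :: 'a \<Rightarrow> real) \<in> borel_measurable M \<Longrightarrow>
   (\<lambda>(s, w). indicator {s. s \<le> U w} s :: real) \<in> borel_measurable (borel \<Otimes>\<^sub>M M)"
proof -
  assume [measurable]: "U \<in> borel_measurable M"
  have [measurable]: "{x \<in> space (borel \<Otimes>\<^sub>M M). fst x \<le> U (snd x)} \<in> sets (borel \<Otimes>\<^sub>M M)"
    by (rule borel_measurable_le) measurable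
  have "(\<lambda>(s, w). indicator {s. s \<le> U w} s :: real) = (\<lambda>p. if fst p \<le> U (snd p) then 1 else 0)"
    by (auto simp: indicator_def split: prod.splits)
  also have "\<dots> \<in> borel_measurable (borel \<Otimes>\<^sub>M M)" unfolding pred_def by measurable
  finally show ?thesis .
qed

lemma ind_bound: "\<bar>indicator A x :: real\<bar> \<le> 1" by (simp add: indicator_def)

lemma exp_repr:
  fixes M :: "'a measure" and a :: "real \<Rightarrow> real" and I :: "real \<Rightarrow> 'a \<Rightarrow> real"
  assumes M: "prob_space M"
    and am[measurable]: "a \<in> borel_measurable borel" and ab: "\<And>s. \<bar>a s\<bar> \<le> A"
    and Im[measurable]: "case_prod I \<in> borel_measurable (borel \<Otimes>\<^sub>M M)" and Ib: "\<And>s w. \<bar>I s w\<bar> \<le> 1"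
  shows "(\<integral>w. (\<integral>s. a s * I s w \<partial>NR R) \<partial>M) = (\<integral>s. a s * (\<integral>w. I s w \<partial>M) \<partial>NR R)"
    and "integrable (NR R) (\<lambda>s. a s * (\<integral>w. I s w \<partial>M))"
proof -
  interpret P: prob_space M by fact
  have Im': "case_prod I \<in> borel_measurable (NR R \<Otimes>\<^sub>M M)" using Im NR_prod_meas by blast
  have am': "a \<in> borel_measurable (NR R)" using am by (simp only: NR_meas_iff)
  show "(\<integral>w. (\<integral>s. a s * I s w \<partial>NR R) \<partial>M) = (\<integral>s. a s * (\<integral>w. I s w \<partial>M) \<partial>NR R)"
  proof (rule trans[OF swap_int[OF M, where B=A]])
    show "(\<lambda>(s, w). a s * I s w) \<in> borel_measurable (NR R \<Otimes>\<^sub>M M)"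
      using Im' am' by measurable
    show "\<bar>a s * I s w\<bar> \<le> A" for s w by (rule abs_mult_le1[OF ab Ib])
  qed simp
  have E1m[measurable]: "(\<lambda>s. \<integral>w. I s w \<partial>M) \<in> borel_measurable borel"
    by (rule P.borel_measurable_lebesgue_integral) (use Im in simp)
  show "integrable (NR R) (\<lambda>s. a s * (\<integral>w. I s w \<partial>M))"
    by (rule NR_integrable[where C=A]) (measurable, rule abs_mult_le1[OF ab prob_int_bound[OF M Ib]])
qed

lemma moment_transfer:
  fixes M :: "'a measure" and U V :: "'a \<Rightarrow> real"
  assumes M: "prob_space M" and Um[measurable]: "U \<in> borel_measurable M" and Vm[measurable]: "V \<in> borel_measurable M"
    and U0: "\<And>w. 0 \<le> U w" and V0: "\<And>w. 0 \<le> V w" and C0: "0 \<le> C"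
    and dom: "\<And>t. t > 0 \<Longrightarrow> measure M {w\<in>space M. U w > t} \<le> C * measure M {w\<in>space M. V w > t}"
    and T: "0 \<le> T" and n: "1 \<le> n"
  shows "(\<integral>w. (min (U w) T)^(n+1) \<partial>M) \<le> C * (\<integral>w. (min (V w) T)^(n+1) \<partial>M)"
proof -
  interpret P: prob_space M by fact
  define a where "a s = indicator {0..T} s * s^n" for s :: real
  have am[measurable]: "a \<in> borel_measurable borel" unfolding a_def by measurable
  have ab: "\<bar>a s\<bar> \<le> T^n" for s unfolding a_def by (rule wbound[OF T])
  have a0: "0 \<le> a s" for s unfolding a_def by (auto simp: indicator_def)
  have az: "a s = 0" if "s \<le> 0" for s
    using that n unfolding a_def by (cases "s = 0") (auto simp: indicator_def)
  have key: "(\<integral>w. (min (W w) T)^(n+1) \<partial>M) = (n+1) * (\<integral>s. a s * measure M {w\<in>space M. W w > s} \<partial>NR T)"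
    and keyi: "integrable (NR T) (\<lambda>s. a s * measure M {w\<in>space M. W w > s})"
    if Wm[measurable]: "W \<in> borel_measurable M" and W0: "\<And>w. 0 \<le> W w" for W
  proof -
    note I = ind_lt_meas[OF Wm]
    have ph: "(\<integral>s. a s * indicator {s. s < W w} s \<partial>NR T) = (min (W w) T)^(n+1)/(n+1)" for w
      unfolding a_def by (rule phi_lt[OF T order.refl W0])
    have pr: "(\<integral>w. indicator {s. s < W w} s \<partial>M) = measure M {w\<in>space M. W w > s}" for s
    proof -
      have "(\<integral>w. indicator {s. s < W w} s \<partial>M) = (\<integral>w. indicator {w\<in>space M. W w > s} w \<partial>M)"
        by (rule Bochner_Integration.integral_cong) (auto simp: indicator_def)
      also have "\<dots> = measure M {w\<in>space M. W w > s}" by simp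
      finally show ?thesis .
    qed
    note e = exp_repr[OF M am ab I ind_bound, of T]
    have "(\<integral>w. (min (W w) T)^(n+1) \<partial>M) = (\<integral>w. (n+1) * (\<integral>s. a s * indicator {s. s < W w} s \<partial>NR T) \<partial>M)"
      by (simp add: ph)
    also have "\<dots> = (n+1) * (\<integral>w. (\<integral>s. a s * indicator {s. s < W w} s \<partial>NR T) \<partial>M)" by simp
    also have "\<dots> = (n+1) * (\<integral>s. a s * measure M {w\<in>space M. W w > s} \<partial>NR T)"
      using e(1) by (simp add: pr)
    finally show "(\<integral>w. (min (W w) T)^(n+1) \<partial>M) = (n+1) * (\<integral>s. a s * measure M {w\<in>space M. W w > s} \<partial>NR T)" .
    show "integrable (NR T) (\<lambda>s. a s * measure M {w\<in>space M. W w > s})"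
      using e(2) by (simp add: pr)
  qed
  have "(\<integral>s. a s * measure M {w\<in>space M. U w > s} \<partial>NR T) \<le> (\<integral>s. C * (a s * measure M {w\<in>space M. V w > s}) \<partial>NR T)"
  proof (rule integral_mono[OF keyi[OF Um U0]])
    show "integrable (NR T) (\<lambda>s. C * (a s * measure M {w\<in>space M. V w > s}))"
      using keyi[OF Vm V0] by simp
    fix s
    show "a s * measure M {w\<in>space M. U w > s} \<le> C * (a s * measure M {w\<in>space M. V w > s})"
    proof (cases "s > 0")
      case True
      then have "a s * measure M {w\<in>space M. U w > s} \<le> a s * (C * measure M {w\<in>space M. V w > s})"
        using dom a0 by (intro mult_left_mono) auto
      then show ?thesis by (simp add: ac_simps)
    next
      case False
      then show ?thesis using az[of s] by simp
    qed
  qed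
  then have "(\<integral>s. a s * measure M {w\<in>space M. U w > s} \<partial>NR T) \<le> C * (\<integral>s. a s * measure M {w\<in>space M. V w > s} \<partial>NR T)"
    by simp
  then show ?thesis unfolding key[OF Um U0] key[OF Vm V0]
    by (simp add: mult_left_mono)
qed

lemma pqd_upper:
  fixes M :: "'a measure" and X Y :: "'a \<Rightarrow> real"
  assumes M: "prob_space M" and [measurable]: "X \<in> borel_measurable M" "Y \<in> borel_measurable M"
    and pqd: "0 \<le> measure M {w\<in>space M. X w \<le> s \<and> Y w \<le> r} - measure M {w\<in>space M. X w \<le> s} * measure M {w\<in>space M. Y w \<le> r}"
  shows "0 \<le> measure M {w\<in>space M. X w > s \<and> Y w > r} - measure M {w\<in>space M. X w > s} * measure M {w\<in>space M. Y w > r}"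
proof -
  interpret P: prob_space M by fact
  define Ac where "Ac = {w\<in>space M. X w \<le> s}"
  define Bc where "Bc = {w\<in>space M. Y w \<le> r}"
  have [measurable]: "Ac \<in> sets M" "Bc \<in> sets M" unfolding Ac_def Bc_def by measurable
  have f: "Ac \<in> fmeasurable M" "Bc \<in> fmeasurable M" by (auto simp: P.fmeasurable_eq_sets)
  have e1: "{w\<in>space M. X w > s \<and> Y w > r} = space M - (Ac \<union> Bc)" unfolding Ac_def Bc_def by auto
  have e2: "{w\<in>space M. X w > s} = space M - Ac" unfolding Ac_def by auto
  have e3: "{w\<in>space M. Y w > r} = space M - Bc" unfolding Bc_def by auto
  have i: "Ac \<inter> Bc = {w\<in>space M. X w \<le> s \<and> Y w \<le> r}" unfolding Ac_def Bc_def by auto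
  have h1: "measure M (space M - (Ac \<union> Bc)) = 1 - measure M Ac - measure M Bc + measure M {w\<in>space M. X w \<le> s \<and> Y w \<le> r}"
    using P.prob_compl[of "Ac \<union> Bc"] measure_Un3[OF f] i by simp
  have h2: "measure M (space M - Ac) = 1 - measure M Ac" using P.prob_compl[of Ac] by simp
  have h3: "measure M (space M - Bc) = 1 - measure M Bc" using P.prob_compl[of Bc] by simp
  show ?thesis using pqd unfolding e1 e2 e3 h1 h2 h3 Ac_def[symmetric] Bc_def[symmetric]
    by (simp add: algebra_simps)
qed

lemma int_ind_prod:
  fixes M :: "'a measure" and X Y :: "'a \<Rightarrow> real"
  assumes M: "prob_space M" and [measurable]: "X \<in> borel_measurable M" "Y \<in> borel_measurable M"
  shows "(\<integral>w. (indicator {s. P s (X w)} s :: real) * indicator {r. Q r (Y w)} r \<partial>M)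
           = measure M {w\<in>space M. P s (X w) \<and> Q r (Y w)}"
    and "(\<integral>w. (indicator {s. P s (X w)} s :: real) \<partial>M) = measure M {w\<in>space M. P s (X w)}"
proof -
  have "(\<integral>w. (indicator {s. P s (X w)} s :: real) * indicator {r. Q r (Y w)} r \<partial>M)
      = (\<integral>w. indicator {w\<in>space M. P s (X w) \<and> Q r (Y w)} w \<partial>M)"
    by (rule Bochner_Integration.integral_cong) (auto simp: indicator_def)
  then show "(\<integral>w. (indicator {s. P s (X w)} s :: real) * indicator {r. Q r (Y w)} r \<partial>M)
           = measure M {w\<in>space M. P s (X w) \<and> Q r (Y w)}"
    by (simp add: Int_absorb2 subset_iff)
  have "(\<integral>w. (indicator {s. P s (X w)} s :: real) \<partial>M) = (\<integral>w. indicator {w\<in>space M. P s (X w)} w \<partial>M)"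
    by (rule Bochner_Integration.integral_cong) (auto simp: indicator_def)
  then show "(\<integral>w. (indicator {s. P s (X w)} s :: real) \<partial>M) = measure M {w\<in>space M. P s (X w)}"
    by (simp add: Int_absorb2 subset_iff)
qed

lemma trunc_nonneg: "0 \<le> u \<Longrightarrow> 0 \<le> T \<Longrightarrow> trunc T u = min u T"
  unfolding trunc_def by simp

lemma pos_part_nn: "0 \<le> pos_part z" unfolding pos_part_def by simp
lemma neg_part_nn: "0 \<le> neg_part z" unfolding neg_part_def by simp

lemma pos_part_meas[measurable]: "f \<in> borel_measurable M \<Longrightarrow> (\<lambda>w. pos_part (f w)) \<in> borel_measurable M"
  unfolding pos_part_def by measurable
lemma neg_part_meas[measurable]: "f \<in> borel_measurable M \<Longrightarrow> (\<lambda>w. neg_part (f w)) \<in> borel_measurable M"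
  unfolding neg_part_def by measurable

lemma Gfun_pos: "0 \<le> T \<Longrightarrow> Gfun M (\<lambda>w. pos_part (X w)) (\<lambda>w. pos_part (Y w)) T
   = Cov M (\<lambda>w. min (pos_part (X w)) T) (\<lambda>w. min (pos_part (Y w)) T)"
  unfolding Gfun_def by (simp add: trunc_nonneg pos_part_nn)

lemma Gfun_neg: "0 \<le> T \<Longrightarrow> Gfun M (\<lambda>w. neg_part (X w)) (\<lambda>w. neg_part (Y w)) T
   = Cov M (\<lambda>w. min (neg_part (X w)) T) (\<lambda>w. min (neg_part (Y w)) T)"
  unfolding Gfun_def by (simp add: trunc_nonneg neg_part_nn)

locale pqd_pair =
  fixes M :: "'a measure" and X Y :: "'a \<Rightarrow> real"
  assumes M: "prob_space M" and Xm[measurable]: "X \<in> borel_measurable M" and Ym[measurable]: "Y \<in> borel_measurable M"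
    and pqd: "\<And>a b. 0 \<le> measure M {w\<in>space M. X w \<le> a \<and> Y w \<le> b}
                       - measure M {w\<in>space M. X w \<le> a} * measure M {w\<in>space M. Y w \<le> b}"
begin

lemma pos_hb:
  shows "\<And>T. 0 \<le> T \<Longrightarrow> Cov M (\<lambda>w. (min (pos_part (X w)) T)^2) (\<lambda>w. (min (pos_part (Y w)) T)^2)
             \<le> 4 * T^2 * Cov M (\<lambda>w. min (pos_part (X w)) T) (\<lambda>w. min (pos_part (Y w)) T)"
    and "\<And>T T'. 0 \<le> T \<Longrightarrow> T \<le> T' \<Longrightarrow> Cov M (\<lambda>w. min (pos_part (X w)) T) (\<lambda>w. min (pos_part (Y w)) T)
             \<le> Cov M (\<lambda>w. min (pos_part (X w)) T') (\<lambda>w. min (pos_part (Y w)) T')"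
    and "\<And>T. 0 \<le> T \<Longrightarrow> 0 \<le> Cov M (\<lambda>w. min (pos_part (X w)) T) (\<lambda>w. min (pos_part (Y w)) T)"
proof -
  have Dnn: "0 \<le> (\<integral>w. (indicator {s. s < pos_part (X w)} s :: real) * indicator {r. r < pos_part (Y w)} r \<partial>M)
      - (\<integral>w. (indicator {s. s < pos_part (X w)} s :: real) \<partial>M) * (\<integral>w. (indicator {r. r < pos_part (Y w)} r :: real) \<partial>M)"
    if "0 \<le> s" "0 \<le> r" for s r
  proof -
    have e1: "{w\<in>space M. s < pos_part (X w) \<and> r < pos_part (Y w)} = {w\<in>space M. X w > s \<and> Y w > r}"
      using that unfolding pos_part_def by auto
    have e2: "{w\<in>space M. s < pos_part (X w)} = {w\<in>space M. X w > s}"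
      using that unfolding pos_part_def by auto
    have e3: "{w\<in>space M. r < pos_part (Y w)} = {w\<in>space M. Y w > r}"
      using that unfolding pos_part_def by auto
    show ?thesis
      unfolding int_ind_prod(1)[OF M pos_part_meas[OF Xm] pos_part_meas[OF Ym], where P="\<lambda>s u. s < u" and Q="\<lambda>s u. s < u"]
        int_ind_prod(2)[OF M pos_part_meas[OF Xm] pos_part_meas[OF Xm], where P="\<lambda>s u. s < u"]
        int_ind_prod(2)[OF M pos_part_meas[OF Ym] pos_part_meas[OF Ym], where P="\<lambda>s u. s < u"]
        e1 e2 e3
      by (rule pqd_upper[OF M Xm Ym pqd])
  qed
  note hb = hoeff_bounds[OF M ind_lt_meas[OF pos_part_meas[OF Xm]] ind_bound ind_lt_meas[OF pos_part_meas[OF Ym]] ind_bound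
     phi_lt[OF _ _ pos_part_nn] phi_lt[OF _ _ pos_part_nn] Dnn]
  show "\<And>T. 0 \<le> T \<Longrightarrow> Cov M (\<lambda>w. (min (pos_part (X w)) T)^2) (\<lambda>w. (min (pos_part (Y w)) T)^2)
             \<le> 4 * T^2 * Cov M (\<lambda>w. min (pos_part (X w)) T) (\<lambda>w. min (pos_part (Y w)) T)"
    by (rule hb(1))
  show "\<And>T T'. 0 \<le> T \<Longrightarrow> T \<le> T' \<Longrightarrow> Cov M (\<lambda>w. min (pos_part (X w)) T) (\<lambda>w. min (pos_part (Y w)) T)
             \<le> Cov M (\<lambda>w. min (pos_part (X w)) T') (\<lambda>w. min (pos_part (Y w)) T')"
    by (rule hb(2))
  show "\<And>T. 0 \<le> T \<Longrightarrow> 0 \<le> Cov M (\<lambda>w. min (pos_part (X w)) T) (\<lambda>w. min (pos_part (Y w)) T)"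
    by (rule hb(3))
qed

lemma neg_hb:
  shows "\<And>T. 0 \<le> T \<Longrightarrow> Cov M (\<lambda>w. (min (neg_part (X w)) T)^2) (\<lambda>w. (min (neg_part (Y w)) T)^2)
             \<le> 4 * T^2 * Cov M (\<lambda>w. min (neg_part (X w)) T) (\<lambda>w. min (neg_part (Y w)) T)"
    and "\<And>T T'. 0 \<le> T \<Longrightarrow> T \<le> T' \<Longrightarrow> Cov M (\<lambda>w. min (neg_part (X w)) T) (\<lambda>w. min (neg_part (Y w)) T)
             \<le> Cov M (\<lambda>w. min (neg_part (X w)) T') (\<lambda>w. min (neg_part (Y w)) T')"
    and "\<And>T. 0 \<le> T \<Longrightarrow> 0 \<le> Cov M (\<lambda>w. min (neg_part (X w)) T) (\<lambda>w. min (neg_part (Y w)) T)"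
proof -
  interpret P: prob_space M by (rule M)
  have Dnn: "0 \<le> (\<integral>w. (indicator {s. s \<le> neg_part (X w)} s :: real) * indicator {r. r \<le> neg_part (Y w)} r \<partial>M)
      - (\<integral>w. (indicator {s. s \<le> neg_part (X w)} s :: real) \<partial>M) * (\<integral>w. (indicator {r. r \<le> neg_part (Y w)} r :: real) \<partial>M)"
    if sr: "0 \<le> s" "0 \<le> r" for s r
    unfolding int_ind_prod(1)[OF M neg_part_meas[OF Xm] neg_part_meas[OF Ym], where P="\<lambda>s u. s \<le> u" and Q="\<lambda>s u. s \<le> u"]
        int_ind_prod(2)[OF M neg_part_meas[OF Xm] neg_part_meas[OF Xm], where P="\<lambda>s u. s \<le> u"]
        int_ind_prod(2)[OF M neg_part_meas[OF Ym] neg_part_meas[OF Ym], where P="\<lambda>s u. s \<le> u"]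
  proof -
    consider "s = 0" | "r = 0" | "0 < s" "0 < r" using sr by linarith
    then show "0 \<le> measure M {w\<in>space M. s \<le> neg_part (X w) \<and> r \<le> neg_part (Y w)}
      - measure M {w\<in>space M. s \<le> neg_part (X w)} * measure M {w\<in>space M. r \<le> neg_part (Y w)}"
    proof cases
      case 1
      then show ?thesis using neg_part_nn by (simp add: P.prob_space)
    next
      case 2
      then show ?thesis using neg_part_nn by (simp add: P.prob_space)
    next
      case 3
      have e1: "{w\<in>space M. s \<le> neg_part (X w) \<and> r \<le> neg_part (Y w)} = {w\<in>space M. X w \<le> -s \<and> Y w \<le> -r}"
        using 3 unfolding neg_part_def by auto
      have e2: "{w\<in>space M. s \<le> neg_part (X w)} = {w\<in>space M. X w \<le> -s}"
        using 3 unfolding neg_part_def by auto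
      have e3: "{w\<in>space M. r \<le> neg_part (Y w)} = {w\<in>space M. Y w \<le> -r}"
        using 3 unfolding neg_part_def by auto
      show ?thesis unfolding e1 e2 e3 by (rule pqd)
    qed
  qed
  note hb = hoeff_bounds[OF M ind_le_meas[OF neg_part_meas[OF Xm]] ind_bound ind_le_meas[OF neg_part_meas[OF Ym]] ind_bound
     phi_le[OF _ _ neg_part_nn] phi_le[OF _ _ neg_part_nn] Dnn]
  show "\<And>T. 0 \<le> T \<Longrightarrow> Cov M (\<lambda>w. (min (neg_part (X w)) T)^2) (\<lambda>w. (min (neg_part (Y w)) T)^2)
             \<le> 4 * T^2 * Cov M (\<lambda>w. min (neg_part (X w)) T) (\<lambda>w. min (neg_part (Y w)) T)"
    by (rule hb(1))
  show "\<And>T T'. 0 \<le> T \<Longrightarrow> T \<le> T' \<Longrightarrow> Cov M (\<lambda>w. min (neg_part (X w)) T) (\<lambda>w. min (neg_part (Y w)) T)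
             \<le> Cov M (\<lambda>w. min (neg_part (X w)) T') (\<lambda>w. min (neg_part (Y w)) T')"
    by (rule hb(2))
  show "\<And>T. 0 \<le> T \<Longrightarrow> 0 \<le> Cov M (\<lambda>w. min (neg_part (X w)) T) (\<lambda>w. min (neg_part (Y w)) T)"
    by (rule hb(3))
qed

end

lemma count_le: "0 \<le> (x::real) \<Longrightarrow> (\<Sum>j=1..N. (indicator {w. real j < w} x :: real)) \<le> x"
proof (induction N)
  case 0
  then show ?case by simp
next
  case (Suc N)
  have bN: "(\<Sum>j=1..N. (indicator {w. real j < w} x :: real)) \<le> real N"
  proof -
    have "(\<Sum>j=1..N. (indicator {w. real j < w} x :: real)) \<le> (\<Sum>j=1..N. 1)"
      by (intro sum_mono) (simp add: indicator_def)
    then show ?thesis by simp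
  qed
  show ?case
  proof (cases "real (Suc N) < x")
    case True
    then show ?thesis using bN by (simp add: sum.atLeast1_atMost_eq indicator_def)
  next
    case False
    then show ?thesis using Suc by (simp add: indicator_def)
  qed
qed

lemma geo_aux: "0 \<le> (x::real) \<Longrightarrow>
  (\<Sum>i<N. (min x (2^i))^2 / 2^i) \<le> (if 2^N \<le> x then 2^N else 4*x - 2*x^2/2^N)"
proof (induction N)
  case 0
  show ?case
  proof (cases "1 \<le> x")
    case True then show ?thesis by simp
  next
    case False
    have "0 \<le> 2*x*(2-x)" using 0 False by simp
    then show ?thesis using False by (simp add: power2_eq_square algebra_simps)
  qed
next
  case (Suc N)
  define y :: real where "y = 2^N"
  have y0: "0 < y" unfolding y_def by simp
  have IH: "(\<Sum>i<N. (min x (2^i))^2 / 2^i) \<le> (if y \<le> x then y else 4*x - 2*x^2/y)"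
    using Suc unfolding y_def by simp
  have step: "(\<Sum>i<Suc N. (min x (2^i))^2 / 2^i) = (\<Sum>i<N. (min x (2^i))^2 / 2^i) + (min x y)^2 / y"
    unfolding y_def by simp
  have y2: "(2::real)^Suc N = 2*y" unfolding y_def by simp
  define S where "S = (\<Sum>i<N. (min x (2^i))^2 / 2^i)"
  have IH': "S \<le> (if y \<le> x then y else 4*x - 2*x^2/y)" using IH unfolding S_def .
  have goal: "S + (min x y)^2 / y \<le> (if 2*y \<le> x then 2*y else 4*x - 2*x^2/(2*y))"
  proof -
    consider "2*y \<le> x" | "y \<le> x" "x < 2*y" | "x < y" by linarith
    then show ?thesis
    proof cases
      case 1
      then have t: "(min x y)^2 / y = y" using y0 by (simp add: power2_eq_square)
      have "S \<le> y" using IH' 1 y0 by simp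
      then show ?thesis using 1 t by simp
    next
      case 2
      then have t: "(min x y)^2 / y = y" using y0 by (simp add: power2_eq_square)
      have Sy: "S \<le> y" using IH' 2 by simp
      have p: "0 \<le> (2*y - x) * (x - y)" using 2 by simp
      have q: "(2*y - x) * (x - y) = 3*x*y - x*x - 2*y*y" by (simp add: algebra_simps)
      have r: "0 \<le> x*y" using 2 y0 by simp
      have "x*x \<le> 4*x*y - 2*y*y" using p q r by linarith
      then have "x*x/(y) \<le> 4*x - 2*y" using y0 by (simp add: field_simps)
      moreover have "2*x^2/(2*y) = x*x/y" by (simp add: power2_eq_square)
      ultimately have "2*y \<le> 4*x - 2*x^2/(2*y)" by linarith
      then show ?thesis using 2 Sy t by simp
    next
      case 3
      then have t: "(min x y)^2 / y = x^2/y" by simp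
      have Sy: "S \<le> 4*x - 2*x^2/y" using IH' 3 by simp
      have a1: "2*x^2/y = 2*(x^2/y)" by simp
      have a2: "2*x^2/(2*y) = x^2/y" by simp
      have n2: "\<not> 2*y \<le> x" using 3 y0 by simp
      have h: "S + x^2/y \<le> 4*x - 2*x^2/(2*y)" using Sy a1 a2 by linarith
      show ?thesis unfolding t if_not_P[OF n2] by (rule h)
    qed
  qed
  show ?case unfolding step y2 using goal unfolding S_def .
qed

lemma geo_sum: "0 \<le> (x::real) \<Longrightarrow> (\<Sum>i<N. (min x (2^i))^2 / 2^i) \<le> 4 * x"
proof -
  assume x: "0 \<le> x"
  have "(if 2^N \<le> x then 2^N else 4*x - 2*x^2/2^N) \<le> 4*x"
    using x by (auto simp: divide_nonneg_pos)
  then show ?thesis using geo_aux[OF x, of N] by linarith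
qed

lemma bounded_integrable:
  fixes f :: "'a \<Rightarrow> real"
  assumes "prob_space M" "f \<in> borel_measurable M" "\<And>w. \<bar>f w\<bar> \<le> B"
  shows "integrable M f"
proof -
  interpret P: prob_space M by fact
  show ?thesis by (rule P.integrable_const_bound[where B=B]) (use assms in auto)
qed

lemma tail_sum:
  fixes W :: "'a \<Rightarrow> real"
  assumes M: "prob_space M" and Wm[measurable]: "W \<in> borel_measurable M" and W0: "\<And>w. 0 \<le> W w"
    and Wi: "integrable M W"
  shows "(\<Sum>j=1..N. measure M {w\<in>space M. W w > real j}) \<le> (\<integral>w. W w \<partial>M)"
proof -
  interpret P: prob_space M by fact
  have "(\<Sum>j=1..N. measure M {w\<in>space M. W w > real j}) = (\<Sum>j=1..N. (\<integral>w. indicator {v. real j < v} (W w) \<partial>M))"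
  proof (rule sum.cong)
    fix j
    have "(\<integral>w. indicator {v. real j < v} (W w) \<partial>M) = (\<integral>w. indicator {w\<in>space M. W w > real j} w \<partial>M)"
      by (rule Bochner_Integration.integral_cong) (auto simp: indicator_def)
    also have "\<dots> = measure M {w\<in>space M. W w > real j}" by (simp add: Int_absorb2 subset_iff)
    finally show "measure M {w\<in>space M. W w > real j} = (\<integral>w. indicator {v. real j < v} (W w) \<partial>M)" by simp
  qed simp
  also have "\<dots> = (\<integral>w. (\<Sum>j=1..N. indicator {v. real j < v} (W w)) \<partial>M)"
    by (rule Bochner_Integration.integral_sum[symmetric])
       (rule bounded_integrable[OF M _ ind_bound], measurable)
  also have "\<dots> \<le> (\<integral>w. W w \<partial>M)"
  proof (rule integral_mono[OF _ Wi])
    show "integrable M (\<lambda>w. \<Sum>j = 1..N. indicator {v. real j < v} (W w) :: real)"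
      by (intro Bochner_Integration.integrable_sum bounded_integrable[OF M _ ind_bound]) measurable
    show "(\<Sum>j = 1..N. indicator {v. real j < v} (W w)) \<le> W w" for w
      by (rule count_le[OF W0])
  qed
  finally show ?thesis .
qed

lemma Cov_sym: "Cov M X Y = Cov M Y X"
  unfolding Cov_def by (simp add: mult.commute)

lemma cov_sum:
  fixes X :: "nat \<Rightarrow> 'a \<Rightarrow> real"
  assumes M: "prob_space M" and Xm: "\<And>k. X k \<in> borel_measurable M" and Xb: "\<And>k w. \<bar>X k w\<bar> \<le> B"
    and S: "finite S"
  shows "Cov M (\<lambda>w. \<Sum>k\<in>S. X k w) (\<lambda>w. \<Sum>k\<in>S. X k w) = (\<Sum>k\<in>S. \<Sum>j\<in>S. Cov M (X k) (X j))"
proof -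
  have i1: "integrable M (X k)" for k by (rule bounded_integrable[OF M Xm Xb])
  have i2: "integrable M (\<lambda>w. X k w * X j w)" for k j
    by (rule bounded_integrable[OF M _ abs_mult2_le[OF Xb Xb]]) (use Xm in measurable)
  have "(\<integral>w. (\<Sum>k\<in>S. X k w) * (\<Sum>k\<in>S. X k w) \<partial>M) = (\<integral>w. (\<Sum>k\<in>S. \<Sum>j\<in>S. X k w * X j w) \<partial>M)"
    by (simp add: sum_product)
  also have "\<dots> = (\<Sum>k\<in>S. \<Sum>j\<in>S. (\<integral>w. X k w * X j w \<partial>M))"
    by (simp add: Bochner_Integration.integral_sum Bochner_Integration.integrable_sum i2)
  finally have a: "(\<integral>w. (\<Sum>k\<in>S. X k w) * (\<Sum>k\<in>S. X k w) \<partial>M) = (\<Sum>k\<in>S. \<Sum>j\<in>S. (\<integral>w. X k w * X j w \<partial>M))" .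
  have b: "(\<integral>w. (\<Sum>k\<in>S. X k w) \<partial>M) = (\<Sum>k\<in>S. (\<integral>w. X k w \<partial>M))"
    by (simp add: Bochner_Integration.integral_sum i1)
  show ?thesis unfolding Cov_def a b
    by (simp add: sum_product sum_subtractf)
qed

lemma cheb:
  fixes Z :: "'a \<Rightarrow> real"
  assumes M: "prob_space M" and Zm[measurable]: "Z \<in> borel_measurable M" and Zb: "\<And>w. \<bar>Z w\<bar> \<le> B" and a: "0 < a"
  shows "measure M {w\<in>space M. a \<le> \<bar>Z w - (\<integral>v. Z v \<partial>M)\<bar>} \<le> Cov M Z Z / a^2"
proof -
  interpret P: prob_space M by fact
  have i1: "integrable M Z" by (rule bounded_integrable[OF M Zm Zb])
  have i2: "integrable M (\<lambda>w. (Z w)^2)"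
  proof -
    have "integrable M (\<lambda>w. Z w * Z w)"
      by (rule bounded_integrable[OF M _ abs_mult2_le[OF Zb Zb]]) measurable
    then show ?thesis by (simp add: power2_eq_square)
  qed
  have "P.variance Z = Cov M Z Z"
    unfolding P.variance_eq[OF i1 i2] Cov_def by (simp add: power2_eq_square)
  then show ?thesis using P.Chebyshev_inequality[OF Zm i2 a] by simp
qed

lemma dyadic_disj: "(2::real)^i \<le> t \<Longrightarrow> t < 2^(i+1) \<Longrightarrow> 2^i' \<le> t \<Longrightarrow> t < 2^(i'+1) \<Longrightarrow> i = i'"
proof (rule ccontr)
  assume h: "(2::real)^i \<le> t" "t < 2^(i+1)" "2^i' \<le> t" "t < 2^(i'+1)" "i \<noteq> i'"
  show False
  proof (cases "i < i'")
    case True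
    then have "(2::real)^(i+1) \<le> 2^i'" by (intro power_increasing) auto
    then show False using h by simp
  next
    case False
    then have "i' < i" using h by simp
    then have "(2::real)^(i'+1) \<le> 2^i" by (intro power_increasing) auto
    then show False using h by simp
  qed
qed

lemma pow4: "((2::real)^n)^2 = 4^n"
proof -
  have "(4::real)^n = (2*2)^n" by simp
  also have "\<dots> = 2^n * 2^n" by (rule power_mult_distrib)
  finally show ?thesis by (simp add: power2_eq_square)
qed

lemma pair_bound:
  fixes g :: "real \<Rightarrow> real" and j N :: nat
  assumes j: "1 \<le> j" and gmono: "\<And>T T'. 0 \<le> T \<Longrightarrow> T \<le> T' \<Longrightarrow> g T \<le> g T'"
    and gnn: "\<And>T. 0 \<le> T \<Longrightarrow> 0 \<le> g T"
  shows "ennreal (\<Sum>i\<in>{i. i \<le> N \<and> j \<le> 2^i}. g (sqrt (2^i)) / 2^i)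
     \<le> 4 * (\<integral>\<^sup>+ t\<in>{real j..}. ennreal (t powr (-2) * g (sqrt t)) \<partial>lborel)"
proof -
  define S where "S = {i. i \<le> N \<and> j \<le> 2^i}"
  have finS: "finite S" unfolding S_def by (rule finite_subset[of _ "{..N}"]) auto
  define c where "c i = g (sqrt (2^i)) / 4^(i+1)" for i :: nat
  have c0: "0 \<le> c i" for i unfolding c_def using gnn by simp
  define Iv where "Iv i = {(2::real)^i..<2^(i+1)}" for i :: nat
  have pw: "(\<Sum>i\<in>S. ennreal (c i) * indicator (Iv i) t)
      \<le> ennreal (t powr (-2) * g (sqrt t)) * indicator {real j..} t" for t
  proof (cases "\<exists>i0\<in>S. t \<in> Iv i0")
    case True
    then obtain i0 where i0: "i0 \<in> S" "t \<in> Iv i0" by blast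
    have t1: "2^i0 \<le> t" "t < 2^(i0+1)" using i0 unfolding Iv_def by auto
    have tpos: "0 < t" using t1 by (meson less_le_trans zero_less_numeral zero_less_power)
    have "(\<Sum>i\<in>S. ennreal (c i) * indicator (Iv i) t) = ennreal (c i0) * indicator (Iv i0) t
        + (\<Sum>i\<in>S - {i0}. ennreal (c i) * indicator (Iv i) t)"
      by (rule sum.remove[OF finS i0(1)])
    also have "(\<Sum>i\<in>S - {i0}. ennreal (c i) * indicator (Iv i) t) = 0"
    proof -
      have "t \<notin> Iv i" if "i \<noteq> i0" for i
        using dyadic_disj[of i t i0] t1 that unfolding Iv_def by auto
      then show ?thesis by (intro sum.neutral) auto
    qed
    finally have sum_eq: "(\<Sum>i\<in>S. ennreal (c i) * indicator (Iv i) t) = ennreal (c i0)"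
      using i0 by simp
    have jt: "real j \<le> t"
    proof -
      have "j \<le> 2^i0" using i0 unfolding S_def by simp
      then have "real j \<le> real (2^i0)" by (rule of_nat_mono)
      then have "real j \<le> 2^i0" by simp
      then show ?thesis using t1 by linarith
    qed
    have "c i0 \<le> t powr (-2) * g (sqrt t)"
    proof -
      have a: "1 / 4^(i0+1) \<le> t powr (-2)"
      proof -
        have "t^2 \<le> (2^(i0+1))^2" using t1 tpos by (intro power_mono) auto
        also have "\<dots> = (4::real)^(i0+1)" by (rule pow4)
        finally have "t^2 \<le> 4^(i0+1)" .
        then have "1 / 4^(i0+1) \<le> 1 / t^2" using tpos by (intro divide_left_mono) auto
        also have "1 / t^2 = t powr (-2)" using tpos by (simp add: powr_minus_divide powr_numeral)
        finally show ?thesis .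
      qed
      have b: "g (sqrt (2^i0)) \<le> g (sqrt t)" using t1 by (intro gmono) auto
      have "c i0 = (1 / 4^(i0+1)) * g (sqrt (2^i0))" unfolding c_def by simp
      also have "\<dots> \<le> t powr (-2) * g (sqrt t)"
        using a b gnn[of "sqrt (2^i0)"] by (intro mult_mono) auto
      finally show ?thesis .
    qed
    then show ?thesis unfolding sum_eq using jt by (simp add: ennreal_leI indicator_def)
  next
    case False
    then have "(\<Sum>i\<in>S. ennreal (c i) * indicator (Iv i) t) = 0"
      by (intro sum.neutral) auto
    then show ?thesis by simp
  qed
  have le1: "(\<integral>\<^sup>+ t. (\<Sum>i\<in>S. ennreal (c i) * indicator (Iv i) t) \<partial>lborel)
      \<le> (\<integral>\<^sup>+ t\<in>{real j..}. ennreal (t powr (-2) * g (sqrt t)) \<partial>lborel)"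
    by (rule nn_integral_mono) (rule pw)
  have Ivm: "Iv i \<in> sets lborel" for i unfolding Iv_def by simp
  have "(\<integral>\<^sup>+ t. (\<Sum>i\<in>S. ennreal (c i) * indicator (Iv i) t) \<partial>lborel)
      = (\<Sum>i\<in>S. (\<integral>\<^sup>+ t. ennreal (c i) * indicator (Iv i) t \<partial>lborel))"
    by (rule nn_integral_sum) (use Ivm in simp)
  also have "\<dots> = (\<Sum>i\<in>S. ennreal (c i) * emeasure lborel (Iv i))"
    by (rule sum.cong[OF refl], rule nn_integral_cmult_indicator[OF Ivm])
  also have "\<dots> = (\<Sum>i\<in>S. ennreal (c i * 2^i))"
  proof (rule sum.cong[OF refl])
    fix i
    have "emeasure lborel (Iv i) = ennreal (2^(i+1) - 2^i)" unfolding Iv_def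
      by (rule emeasure_lborel_Ico) simp
    also have "(2::real)^(i+1) - 2^i = 2^i" by simp
    finally show "ennreal (c i) * emeasure lborel (Iv i) = ennreal (c i * 2^i)"
      using c0[of i] by (simp add: ennreal_mult)
  qed
  also have "\<dots> = ennreal (\<Sum>i\<in>S. c i * 2^i)"
    by (rule sum_ennreal) (use c0 in simp)
  finally have le2: "ennreal (\<Sum>i\<in>S. c i * 2^i) \<le> (\<integral>\<^sup>+ t\<in>{real j..}. ennreal (t powr (-2) * g (sqrt t)) \<partial>lborel)"
    using le1 by simp
  have ceq: "g (sqrt (2^i)) / 2^i = 4 * (c i * 2^i)" for i
  proof -
    have p: "(4::real)^(i+1) = 4 * (2^i * 2^i)" using pow4[of i] by (simp add: power2_eq_square)
    show ?thesis unfolding c_def p by (simp add: field_simps)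
  qed
  have "ennreal (\<Sum>i\<in>S. g (sqrt (2^i)) / 2^i) = ennreal (4 * (\<Sum>i\<in>S. c i * 2^i))"
    by (simp add: ceq sum_distrib_left)
  also have "\<dots> = 4 * ennreal (\<Sum>i\<in>S. c i * 2^i)"
    using c0 by (simp add: ennreal_mult sum_nonneg)
  also have "\<dots> \<le> 4 * (\<integral>\<^sup>+ t\<in>{real j..}. ennreal (t powr (-2) * g (sqrt t)) \<partial>lborel)"
    by (rule mult_left_mono[OF le2]) simp
  finally show ?thesis unfolding S_def .
qed

locale sqset =
  fixes M :: "'a measure" and U :: "nat \<Rightarrow> 'a \<Rightarrow> real" and V :: "'a \<Rightarrow> real" and C :: real
  assumes M: "prob_space M"
    and Um[measurable]: "\<And>j. U j \<in> borel_measurable M" and U0: "\<And>j w. 0 \<le> U j w"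
    and Vm[measurable]: "V \<in> borel_measurable M" and V0: "\<And>w. 0 \<le> V w"
    and Vi: "integrable M (\<lambda>w. (V w)^2)" and C0: "0 \<le> C"
    and dom: "\<And>j t. 1 \<le> j \<Longrightarrow> 0 < t \<Longrightarrow> measure M {w\<in>space M. U j w > t} \<le> C * measure M {w\<in>space M. V w > t}"
    and hsq: "\<And>k j T. 1 \<le> k \<Longrightarrow> k < j \<Longrightarrow> 0 \<le> T \<Longrightarrow>
       Cov M (\<lambda>w. (min (U k w) T)^2) (\<lambda>w. (min (U j w) T)^2) \<le> 4 * T^2 * Cov M (\<lambda>w. min (U k w) T) (\<lambda>w. min (U j w) T)"
    and hmono: "\<And>k j T T'. 1 \<le> k \<Longrightarrow> k < j \<Longrightarrow> 0 \<le> T \<Longrightarrow> T \<le> T' \<Longrightarrow>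
       Cov M (\<lambda>w. min (U k w) T) (\<lambda>w. min (U j w) T) \<le> Cov M (\<lambda>w. min (U k w) T') (\<lambda>w. min (U j w) T')"
    and hnn: "\<And>k j T. 1 \<le> k \<Longrightarrow> k < j \<Longrightarrow> 0 \<le> T \<Longrightarrow> 0 \<le> Cov M (\<lambda>w. min (U k w) T) (\<lambda>w. min (U j w) T)"
    and covsum: "(\<Sum>j. \<Sum>k\<in>{1..<j}. \<integral>\<^sup>+ t\<in>{real j..}. ennreal (t powr (-2) *
          Cov M (\<lambda>w. min (U k w) (sqrt t)) (\<lambda>w. min (U j w) (sqrt t))) \<partial>lborel) < \<infinity>"
begin

interpretation P: prob_space M by (rule M)

definition "G k j T = Cov M (\<lambda>w. min (U k w) T) (\<lambda>w. min (U j w) T)"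
definition "Tr (i::nat) = sqrt ((2::real)^i)"
definition "Y i j w = (min (U j w) (Tr i))^2"
definition "Z i w = (\<Sum>j\<in>{1..2^i}. Y i j w)"
definition "m2 = (\<integral>w. (V w)^2 \<partial>M)"

lemma Tr0: "0 \<le> Tr i" unfolding Tr_def by simp
lemma Tr_sq: "(Tr i)^2 = 2^i" unfolding Tr_def by simp

lemma Ym[measurable]: "Y i j \<in> borel_measurable M"
  unfolding Y_def[abs_def] by measurable

lemma Y0: "0 \<le> Y i j w" unfolding Y_def by simp

lemma Yle: "Y i j w \<le> 2^i"
proof -
  have "min (U j w) (Tr i) \<le> Tr i" by simp
  then have "(min (U j w) (Tr i))^2 \<le> (Tr i)^2" using U0[of j w] Tr0[of i] by (intro power_mono) auto
  then show ?thesis unfolding Y_def Tr_sq .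
qed

lemma Yb: "\<bar>Y i j w\<bar> \<le> 2^i" using Y0 Yle by (simp add: abs_of_nonneg)

lemma Zm[measurable]: "Z i \<in> borel_measurable M"
  unfolding Z_def[abs_def] by measurable

lemma Zb: "\<bar>Z i w\<bar> \<le> 2^i * 2^i"
proof -
  have "\<bar>Z i w\<bar> \<le> (\<Sum>j\<in>{1..2^i}. \<bar>Y i j w\<bar>)" unfolding Z_def by (rule sum_abs)
  also have "\<dots> \<le> (\<Sum>j\<in>{1..(2::nat)^i}. (2::real)^i)" by (intro sum_mono Yb)
  also have "\<dots> = 2^i * 2^i" by simp
  finally show ?thesis .
qed

lemma m2_nn: "0 \<le> m2" unfolding m2_def by simp

lemma minV_int: "integrable M (\<lambda>w. (min (V w) T)^n)" if "0 \<le> T"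
  by (rule bounded_integrable[OF M, where B="T^n"]) (use that V0 in \<open>auto intro!: power_mono simp: abs_of_nonneg\<close>)

lemma pow31: "(x::real)^(3+1) = (x^2)^2" by (simp add: power_mult[symmetric])

lemma EY: "1 \<le> j \<Longrightarrow> (\<integral>w. Y i j w \<partial>M) \<le> C * m2"
proof -
  assume j: "1 \<le> j"
  have "(\<integral>w. (min (U j w) (Tr i))^(1+1) \<partial>M) \<le> C * (\<integral>w. (min (V w) (Tr i))^(1+1) \<partial>M)"
    by (rule moment_transfer[OF M Um Vm U0 V0 C0 dom[OF j] Tr0]) auto
  also have "(\<integral>w. (min (V w) (Tr i))^(1+1) \<partial>M) \<le> m2"
    unfolding m2_def
  proof (rule integral_mono[OF minV_int[OF Tr0] Vi])
    fix w
    have "(min (V w) (Tr i))^2 \<le> (V w)^2"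
      by (rule power_mono) (use V0[of w] Tr0[of i] in auto)
    then show "(min (V w) (Tr i))^(1+1) \<le> (V w)^2" by (simp add: power2_eq_square)
  qed
  then have "C * (\<integral>w. (min (V w) (Tr i))^(1+1) \<partial>M) \<le> C * m2" by (rule mult_left_mono[OF _ C0])
  finally show ?thesis unfolding Y_def by (simp add: power2_eq_square)
qed

lemma EY2: "1 \<le> j \<Longrightarrow> (\<integral>w. (Y i j w)^2 \<partial>M) \<le> C * (\<integral>w. (min ((V w)^2) (2^i))^2 \<partial>M)"
proof -
  assume j: "1 \<le> j"
  have "(\<integral>w. (min (U j w) (Tr i))^(3+1) \<partial>M) \<le> C * (\<integral>w. (min (V w) (Tr i))^(3+1) \<partial>M)"
    by (rule moment_transfer[OF M Um Vm U0 V0 C0 dom[OF j] Tr0]) auto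
  moreover have "(min (U j w) (Tr i))^(3+1) = (Y i j w)^2" for w
    unfolding Y_def by (rule pow31)
  moreover have "(min (V w) (Tr i))^(3+1) = (min ((V w)^2) (2^i))^2" for w
  proof -
    have "(min (V w) (Tr i))^2 = min ((V w)^2) ((Tr i)^2)"
      using V0[of w] Tr0[of i] by (cases "V w \<le> Tr i") (auto simp: min_def power_mono intro: antisym)
    moreover have "(min (V w) (Tr i))^(3+1) = ((min (V w) (Tr i))^2)^2" by (rule pow31)
    ultimately show ?thesis unfolding Tr_sq by simp
  qed
  ultimately show ?thesis by simp
qed

end

lemma sum_sym_split:
  fixes a :: "nat \<Rightarrow> real" and b :: "nat \<Rightarrow> nat \<Rightarrow> real"
  assumes S: "finite S"
  shows "(\<Sum>k\<in>S. \<Sum>j\<in>S. (if k = j then a j else if k < j then b k j else b j k))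
       = (\<Sum>j\<in>S. a j) + 2 * (\<Sum>j\<in>S. \<Sum>k\<in>{k\<in>S. k < j}. b k j)"
proof -
  define g where "g k j = (if k < j then b k j else 0)" for k j
  have d: "(if k = j then a j else if k < j then b k j else b j k) = (if k = j then a j else 0) + g k j + g j k" for k j
    unfolding g_def by auto
  have s1: "(\<Sum>k\<in>S. \<Sum>j\<in>S. (if k = j then a j else 0)) = (\<Sum>j\<in>S. a j)"
    using S by (simp add: sum.delta)
  have s2: "(\<Sum>k\<in>S. \<Sum>j\<in>S. g k j) = (\<Sum>j\<in>S. \<Sum>k\<in>{k\<in>S. k < j}. b k j)"
  proof -
    have "(\<Sum>k\<in>S. \<Sum>j\<in>S. g k j) = (\<Sum>j\<in>S. \<Sum>k\<in>S. g k j)" by (rule sum.swap)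
    also have "\<dots> = (\<Sum>j\<in>S. \<Sum>k\<in>{k\<in>S. k < j}. b k j)"
      unfolding g_def using S by (simp add: sum.inter_filter[symmetric])
    finally show ?thesis .
  qed
  have s3: "(\<Sum>k\<in>S. \<Sum>j\<in>S. g j k) = (\<Sum>k\<in>S. \<Sum>j\<in>S. g k j)" by (rule sum.swap)
  show ?thesis
    unfolding d by (simp add: sum.distrib s1 s2 s3)
qed

context sqset
begin

interpretation P: prob_space M by (rule M)

definition "Q i = (\<Sum>j\<in>{1..(2::nat)^i}. \<Sum>k\<in>{1..<j}. G k j (Tr i))"

lemma cov_Y_le:
  assumes k: "1 \<le> k" and j: "1 \<le> j"
  shows "Cov M (Y i k) (Y i j) \<le> (if k = j then (\<integral>w. (Y i j w)^2 \<partial>M)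
           else if k < j then 4 * 2^i * G k j (Tr i) else 4 * 2^i * G j k (Tr i))"
proof (cases "k = j")
  case True
  have "Cov M (Y i j) (Y i j) \<le> (\<integral>w. Y i j w * Y i j w \<partial>M)" unfolding Cov_def by simp
  then show ?thesis using True by (simp add: power2_eq_square)
next
  case False
  note hs = hsq[OF _ _ Tr0, unfolded Tr_sq]
  show ?thesis
  proof (cases "k < j")
    case True
    have "Cov M (Y i k) (Y i j) \<le> 4 * 2^i * G k j (Tr i)"
      using hs[OF k True] unfolding Y_def[abs_def] G_def by simp
    then show ?thesis using True False by simp
  next
    case False2: False
    then have jk: "j < k" using False by simp
    have "Cov M (Y i k) (Y i j) = Cov M (Y i j) (Y i k)" by (rule Cov_sym)
    also have "\<dots> \<le> 4 * 2^i * G j k (Tr i)"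
      using hs[OF j jk] unfolding Y_def[abs_def] G_def by simp
    finally show ?thesis using False False2 by simp
  qed
qed

lemma VarZ: "Cov M (Z i) (Z i) \<le> (\<Sum>j\<in>{1..(2::nat)^i}. (\<integral>w. (Y i j w)^2 \<partial>M)) + 8 * 2^i * Q i"
proof -
  have "Cov M (Z i) (Z i) = (\<Sum>k\<in>{1..(2::nat)^i}. \<Sum>j\<in>{1..(2::nat)^i}. Cov M (Y i k) (Y i j))"
    unfolding Z_def[abs_def] by (rule cov_sum[OF M Ym Yb]) simp
  also have "\<dots> \<le> (\<Sum>k\<in>{1..(2::nat)^i}. \<Sum>j\<in>{1..(2::nat)^i}. (if k = j then (\<integral>w. (Y i j w)^2 \<partial>M)
           else if k < j then 4 * 2^i * G k j (Tr i) else 4 * 2^i * G j k (Tr i)))"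
    by (intro sum_mono cov_Y_le) auto
  also have "\<dots> = (\<Sum>j\<in>{1..(2::nat)^i}. (\<integral>w. (Y i j w)^2 \<partial>M))
      + 2 * (\<Sum>j\<in>{1..(2::nat)^i}. \<Sum>k\<in>{k\<in>{1..(2::nat)^i}. k < j}. 4 * 2^i * G k j (Tr i))"
    by (rule sum_sym_split) simp
  also have "(\<Sum>j\<in>{1..(2::nat)^i}. \<Sum>k\<in>{k\<in>{1..(2::nat)^i}. k < j}. 4 * 2^i * G k j (Tr i))
      = (\<Sum>j\<in>{1..(2::nat)^i}. \<Sum>k\<in>{1..<j}. 4 * 2^i * G k j (Tr i))"
  proof (rule sum.cong[OF refl])
    fix j assume "j \<in> {1..(2::nat)^i}"
    then have "{k\<in>{1..(2::nat)^i}. k < j} = {1..<j}" by auto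
    then show "(\<Sum>k\<in>{k\<in>{1..(2::nat)^i}. k < j}. 4 * 2^i * G k j (Tr i)) = (\<Sum>k\<in>{1..<j}. 4 * 2^i * G k j (Tr i))"
      by simp
  qed
  also have "\<dots> = 4 * 2^i * Q i" unfolding Q_def by (simp add: sum_distrib_left)
  finally show ?thesis by simp
qed

end

context sqset
begin

interpretation P: prob_space M by (rule M)

definition "Ei i = (\<integral>w. (min ((V w)^2) (2^i))^2 \<partial>M)"

lemma Ei_int: "integrable M (\<lambda>w. (min ((V w)^2) (2^i))^2)"
  by (rule bounded_integrable[OF M, where B="2^i * 2^i"])
     (auto simp: abs_of_nonneg power2_eq_square intro!: mult_mono)

lemma Q_nn: "0 \<le> Q i"
  unfolding Q_def G_def by (intro sum_nonneg hnn Tr0) auto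

lemma vbound: "Cov M (Z i) (Z i) / 4^i \<le> C * Ei i / 2^i + 8 * Q i / 2^i"
proof -
  have "(\<Sum>j\<in>{1..(2::nat)^i}. (\<integral>w. (Y i j w)^2 \<partial>M)) \<le> (\<Sum>j\<in>{1..(2::nat)^i}. C * Ei i)"
    unfolding Ei_def by (intro sum_mono EY2) auto
  also have "\<dots> = 2^i * (C * Ei i)" by simp
  finally have "Cov M (Z i) (Z i) \<le> 2^i * (C * Ei i) + 8 * 2^i * Q i" using VarZ[of i] by simp
  then have "Cov M (Z i) (Z i) / 4^i \<le> (2^i * (C * Ei i) + 8 * 2^i * Q i) / 4^i"
    by (simp add: divide_right_mono)
  also have "(2^i * (C * Ei i) + 8 * 2^i * Q i) / 4^i = C * Ei i / 2^i + 8 * Q i / 2^i"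
  proof -
    have "(4::real)^i = 2^i * 2^i" using pow4[of i] by (simp add: power2_eq_square)
    then show ?thesis by (simp add: field_simps)
  qed
  finally show ?thesis .
qed

lemma geo_part: "(\<Sum>i\<le>N. Ei i / 2^i) \<le> 4 * m2"
proof -
  have "(\<Sum>i\<le>N. Ei i / 2^i) = (\<integral>w. (\<Sum>i\<le>N. (min ((V w)^2) (2^i))^2 / 2^i) \<partial>M)"
    unfolding Ei_def
    by (subst Bochner_Integration.integral_sum) (auto intro: Ei_int)
  also have "\<dots> \<le> (\<integral>w. 4 * (V w)^2 \<partial>M)"
  proof (rule integral_mono)
    show "integrable M (\<lambda>w. \<Sum>i\<le>N. (min ((V w)^2) (2^i))^2 / 2^i)"
      by (intro Bochner_Integration.integrable_sum Bochner_Integration.integrable_divide Ei_int)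
    show "integrable M (\<lambda>w. 4 * (V w)^2)" using Vi by simp
    fix w
    have "(\<Sum>i<Suc N. (min ((V w)^2) (2^i))^2 / 2^i) \<le> 4 * (V w)^2" by (rule geo_sum) simp
    then show "(\<Sum>i\<le>N. (min ((V w)^2) (2^i))^2 / 2^i) \<le> 4 * (V w)^2"
      by (simp add: lessThan_Suc_atMost)
  qed
  also have "\<dots> = 4 * m2" unfolding m2_def by simp
  finally show ?thesis .
qed

end

context sqset
begin

definition "Ik k j = (\<integral>\<^sup>+ t\<in>{real j..}. ennreal (t powr (-2) * G k j (sqrt t)) \<partial>lborel)"

lemma covsum': "(\<Sum>j. \<Sum>k\<in>{1..<j}. Ik k j) < \<infinity>"
  using covsum unfolding Ik_def G_def .

lemma swap3: "(\<Sum>i\<le>N. \<Sum>j\<in>{1..(2::nat)^i}. f i j) = (\<Sum>j\<in>{1..(2::nat)^N}. \<Sum>i\<in>{i. i \<le> N \<and> j \<le> 2^i}. f i j)"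
  for f :: "nat \<Rightarrow> nat \<Rightarrow> real"
proof -
  have "(\<Sum>i\<le>N. \<Sum>j\<in>{1..(2::nat)^i}. f i j) = (\<Sum>i\<in>{..N}. \<Sum>j\<in>{j\<in>{1..(2::nat)^N}. j \<le> 2^i}. f i j)"
  proof (rule sum.cong[OF refl])
    fix i assume "i \<in> {..N}"
    then have h: "(2::nat)^i \<le> 2^N" by (intro power_increasing) auto
    have "{j\<in>{1..(2::nat)^N}. j \<le> 2^i} = {1..2^i}" by (auto intro: le_trans[OF _ h])
    then show "(\<Sum>j\<in>{1..(2::nat)^i}. f i j) = (\<Sum>j\<in>{j\<in>{1..(2::nat)^N}. j \<le> 2^i}. f i j)" by simp
  qed
  also have "\<dots> = (\<Sum>j\<in>{1..(2::nat)^N}. \<Sum>i\<in>{i\<in>{..N}. j \<le> 2^i}. f i j)"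
    by (rule sum.swap_restrict) auto
  also have "\<dots> = (\<Sum>j\<in>{1..(2::nat)^N}. \<Sum>i\<in>{i. i \<le> N \<and> j \<le> 2^i}. f i j)"
    by (intro sum.cong refl) auto
  finally show ?thesis .
qed

lemma Q_part_enn: "ennreal (\<Sum>i\<le>N. Q i / 2^i) \<le> 4 * (\<Sum>j. \<Sum>k\<in>{1..<j}. Ik k j)"
proof -
  have "(\<Sum>i\<le>N. Q i / 2^i) = (\<Sum>i\<le>N. \<Sum>j\<in>{1..(2::nat)^i}. \<Sum>k\<in>{1..<j}. G k j (Tr i) / 2^i)"
    unfolding Q_def by (simp add: sum_divide_distrib)
  also have "\<dots> = (\<Sum>j\<in>{1..(2::nat)^N}. \<Sum>i\<in>{i. i \<le> N \<and> j \<le> 2^i}. \<Sum>k\<in>{1..<j}. G k j (Tr i) / 2^i)"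
    by (rule swap3)
  also have "\<dots> = (\<Sum>j\<in>{1..(2::nat)^N}. \<Sum>k\<in>{1..<j}. \<Sum>i\<in>{i. i \<le> N \<and> j \<le> 2^i}. G k j (sqrt (2^i)) / 2^i)"
    unfolding Tr_def by (intro sum.cong refl sum.swap)
  finally have e: "(\<Sum>i\<le>N. Q i / 2^i) = \<dots>" .
  have nn: "0 \<le> (\<Sum>i\<in>{i. i \<le> N \<and> j \<le> 2^i}. G k j (sqrt (2^i)) / 2^i)" if "1 \<le> k" "k < j" for k j
    unfolding G_def using that by (intro sum_nonneg divide_nonneg_pos hnn) auto
  have "ennreal (\<Sum>i\<le>N. Q i / 2^i)
     = (\<Sum>j\<in>{1..(2::nat)^N}. \<Sum>k\<in>{1..<j}. ennreal (\<Sum>i\<in>{i. i \<le> N \<and> j \<le> 2^i}. G k j (sqrt (2^i)) / 2^i))"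
    unfolding e
    by (subst sum_ennreal[symmetric], (intro sum_nonneg nn; auto), intro sum.cong refl,
        subst sum_ennreal[symmetric], (intro nn; auto), rule refl)
  also have "\<dots> \<le> (\<Sum>j\<in>{1..(2::nat)^N}. \<Sum>k\<in>{1..<j}. 4 * Ik k j)"
  proof (intro sum_mono)
    fix j k assume jk: "j \<in> {1..(2::nat)^N}" "k \<in> {1..<j}"
    show "ennreal (\<Sum>i\<in>{i. i \<le> N \<and> j \<le> 2^i}. G k j (sqrt (2^i)) / 2^i) \<le> 4 * Ik k j"
      unfolding Ik_def
    proof (rule pair_bound)
      show "1 \<le> j" using jk by simp
      show "G k j T \<le> G k j T'" if "0 \<le> T" "T \<le> T'" for T T'
        unfolding G_def using jk that by (intro hmono) auto
      show "0 \<le> G k j T" if "0 \<le> T" for T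
        unfolding G_def using jk that by (intro hnn) auto
    qed
  qed
  also have "\<dots> = 4 * (\<Sum>j\<in>{1..(2::nat)^N}. \<Sum>k\<in>{1..<j}. Ik k j)"
    by (simp add: sum_distrib_left)
  also have "\<dots> \<le> 4 * (\<Sum>j. \<Sum>k\<in>{1..<j}. Ik k j)"
    by (intro mult_left_mono sum_le_suminf) auto
  finally show ?thesis .
qed

lemma Q_part: obtains CS where "0 \<le> CS" "\<And>N. (\<Sum>i\<le>N. Q i / 2^i) \<le> 4 * CS"
proof -
  obtain CS where CS: "(\<Sum>j. \<Sum>k\<in>{1..<j}. Ik k j) = ennreal CS" "0 \<le> CS"
    using covsum' by (cases "(\<Sum>j. \<Sum>k\<in>{1..<j}. Ik k j)") auto
  have "(\<Sum>i\<le>N. Q i / 2^i) \<le> 4 * CS" for N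
  proof -
    have "ennreal (\<Sum>i\<le>N. Q i / 2^i) \<le> ennreal (4 * CS)"
      using Q_part_enn[of N] CS by (simp add: ennreal_mult)
    then show ?thesis using CS by (simp add: ennreal_le_iff)
  qed
  then show ?thesis using that CS by blast
qed

end

lemma sqrt_less_iff_sq: "0 \<le> v \<Longrightarrow> sqrt x < v \<longleftrightarrow> x < v^2"
proof -
  assume v: "0 \<le> v"
  have "sqrt x < v \<longleftrightarrow> sqrt x < sqrt (v^2)" using v by (simp add: abs_of_nonneg)
  also have "\<dots> \<longleftrightarrow> x < v^2" by (rule real_sqrt_less_iff)
  finally show ?thesis .
qed

context sqset
begin

interpretation P: prob_space M by (rule M)

lemma EZ: "(\<integral>w. Z i w \<partial>M) \<le> 2^i * (C * m2)"
proof -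
  have "(\<integral>w. Z i w \<partial>M) = (\<Sum>j\<in>{1..(2::nat)^i}. (\<integral>w. Y i j w \<partial>M))"
    unfolding Z_def by (rule Bochner_Integration.integral_sum) (rule bounded_integrable[OF M Ym Yb])
  also have "\<dots> \<le> (\<Sum>j\<in>{1..(2::nat)^i}. C * m2)" by (intro sum_mono EY) auto
  also have "\<dots> = 2^i * (C * m2)" by simp
  finally show ?thesis .
qed

lemma BC1: "AE w in M. \<exists>i0. \<forall>i\<ge>i0. Z i w \<le> 2^i * (C * m2 + 1)"
proof -
  define A where "A i = {w\<in>space M. 2^i \<le> \<bar>Z i w - (\<integral>v. Z i v \<partial>M)\<bar>}" for i
  have Am[measurable]: "A i \<in> sets M" for i unfolding A_def by measurable
  define u where "u i = C * Ei i / 2^i + 8 * Q i / 2^i" for i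
  obtain CS where CS: "0 \<le> CS" "\<And>N. (\<Sum>i\<le>N. Q i / 2^i) \<le> 4 * CS" using Q_part by blast
  have Ei0: "0 \<le> Ei i" for i unfolding Ei_def by simp
  have u0: "0 \<le> u i" for i unfolding u_def using C0 Ei0 Q_nn by simp
  have "(\<Sum>i\<le>N. u i) \<le> C * (4 * m2) + 8 * (4 * CS)" for N
  proof -
    have "(\<Sum>i\<le>N. u i) = C * (\<Sum>i\<le>N. Ei i / 2^i) + 8 * (\<Sum>i\<le>N. Q i / 2^i)"
      unfolding u_def by (simp add: sum.distrib sum_distrib_left)
    also have "\<dots> \<le> C * (4 * m2) + 8 * (4 * CS)"
      using geo_part[of N] CS(2)[of N] C0 by (intro add_mono mult_left_mono) auto
    finally show ?thesis .
  qed
  then have su: "summable u" by (intro bounded_imp_summable u0)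
  have mA: "measure M (A i) \<le> u i" for i
  proof -
    have "measure M (A i) \<le> Cov M (Z i) (Z i) / (2^i)^2"
      unfolding A_def by (rule cheb[OF M Zm Zb]) simp
    also have "((2::real)^i)^2 = 4^i" by (rule pow4)
    finally show ?thesis using vbound[of i] unfolding u_def by simp
  qed
  have "summable (\<lambda>i. measure M (A i))"
    by (rule summable_comparison_test'[OF su]) (use mA in simp)
  then have "AE w in M. eventually (\<lambda>i. w \<in> space M - A i) sequentially"
    using P.emeasure_finite by (intro borel_cantelli_AE1) (auto simp: less_top[symmetric])
  then show ?thesis
  proof (rule AE_mp[OF _ AE_I2], intro impI)
    fix w assume w: "w \<in> space M" and ev: "eventually (\<lambda>i. w \<in> space M - A i) sequentially"
    then obtain i0 where i0: "\<And>i. i \<ge> i0 \<Longrightarrow> w \<in> space M - A i" by (auto simp: eventually_sequentially)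
    have "Z i w \<le> 2^i * (C * m2 + 1)" if "i \<ge> i0" for i
    proof -
      have "\<bar>Z i w - (\<integral>v. Z i v \<partial>M)\<bar> < 2^i" using i0[OF that] w unfolding A_def by auto
      then have "Z i w \<le> (\<integral>v. Z i v \<partial>M) + 2^i" by simp
      also have "\<dots> \<le> 2^i * (C * m2) + 2^i" using EZ[of i] by simp
      finally show ?thesis by (simp add: algebra_simps)
    qed
    then show "\<exists>i0. \<forall>i\<ge>i0. Z i w \<le> 2^i * (C * m2 + 1)" by blast
  qed
qed

lemma BC2: "AE w in M. \<exists>j0\<ge>1. \<forall>j\<ge>j0. (U j w)^2 \<le> real j"
proof -
  define B where "B j = {w\<in>space M. 1 \<le> j \<and> sqrt (real j) < U j w}" for j
  have Bm[measurable]: "B j \<in> sets M" for j unfolding B_def by measurable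
  have Vsq: "{w\<in>space M. V w > sqrt (real j)} = {w\<in>space M. (V w)^2 > real j}" for j
    using V0 sqrt_less_iff_sq by blast
  have mB: "measure M (B j) \<le> C * measure M {w\<in>space M. (V w)^2 > real j}" if "1 \<le> j" for j
  proof -
    have "B j = {w\<in>space M. U j w > sqrt (real j)}" unfolding B_def using that by auto
    then have "measure M (B j) \<le> C * measure M {w\<in>space M. V w > sqrt (real j)}"
      using dom[OF that, of "sqrt (real j)"] that by simp
    then show ?thesis unfolding Vsq .
  qed
  have B0: "B 0 = {}" unfolding B_def by simp
  have "(\<Sum>j\<le>n. measure M (B j)) \<le> C * m2" for n
  proof -
    have "(\<Sum>j\<le>n. measure M (B j)) = (\<Sum>j=1..n. measure M (B j))"
    proof -
      have "{..n} = insert 0 {1..n}" by auto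
      then show ?thesis using B0 by simp
    qed
    also have "\<dots> \<le> (\<Sum>j=1..n. C * measure M {w\<in>space M. (V w)^2 > real j})"
      by (intro sum_mono mB) auto
    also have "\<dots> = C * (\<Sum>j=1..n. measure M {w\<in>space M. (V w)^2 > real j})"
      by (simp add: sum_distrib_left)
    also have "\<dots> \<le> C * m2" unfolding m2_def
      by (intro mult_left_mono C0 tail_sum[OF M _ _ Vi]) auto
    finally show ?thesis .
  qed
  then have "summable (\<lambda>j. measure M (B j))" by (intro bounded_imp_summable) auto
  then have "AE w in M. eventually (\<lambda>j. w \<in> space M - B j) sequentially"
    using P.emeasure_finite by (intro borel_cantelli_AE1) (auto simp: less_top[symmetric])
  then show ?thesis
  proof (rule AE_mp[OF _ AE_I2], intro impI)
    fix w assume w: "w \<in> space M" and ev: "eventually (\<lambda>j. w \<in> space M - B j) sequentially"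
    then obtain j0 where j0: "\<And>j. j \<ge> j0 \<Longrightarrow> w \<in> space M - B j" by (auto simp: eventually_sequentially)
    have "(U j w)^2 \<le> real j" if "j \<ge> max j0 1" for j
    proof -
      have "\<not> sqrt (real j) < U j w" using j0[of j] that w unfolding B_def by auto
      then have "U j w \<le> sqrt (real j)" by simp
      then have "(U j w)^2 \<le> (sqrt (real j))^2" using U0[of j w] by (intro power_mono) auto
      then show ?thesis by simp
    qed
    then show "\<exists>j0\<ge>1. \<forall>j\<ge>j0. (U j w)^2 \<le> real j" by (intro exI[of _ "max j0 1"]) auto
  qed
qed

end

context sqset
begin

interpretation P: prob_space M by (rule M)

lemma Y_eq: "(U j w)^2 \<le> 2^i \<Longrightarrow> Y i j w = (U j w)^2"
proof -
  assume h: "(U j w)^2 \<le> 2^i"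
  have "U j w = sqrt ((U j w)^2)" using U0[of j w] by simp
  also have "\<dots> \<le> Tr i" unfolding Tr_def by (rule real_sqrt_le_mono[OF h])
  finally show ?thesis unfolding Y_def by simp
qed

lemma split_bound:
  assumes j0: "\<forall>j\<ge>j0. (U j w)^2 \<le> real j" and n: "j0 \<le> n" "n \<le> 2^i"
  shows "(\<Sum>j=1..n. (U j w)^2) \<le> (\<Sum>j=1..j0. (U j w)^2) + Z i w"
proof -
  have "(\<Sum>j=1..n. (U j w)^2) = (\<Sum>j=1..j0. (U j w)^2) + (\<Sum>j=Suc j0..n. (U j w)^2)"
  proof -
    have "{1..n} = {1..j0} \<union> {Suc j0..n}" using n(1) by auto
    then show ?thesis by (simp add: sum.union_disjoint)
  qed
  also have "(\<Sum>j=Suc j0..n. (U j w)^2) = (\<Sum>j=Suc j0..n. Y i j w)"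
  proof (rule sum.cong[OF refl])
    fix j assume jj: "j \<in> {Suc j0..n}"
    have "(U j w)^2 \<le> real j" using j0 jj by auto
    also have "real j \<le> 2^i"
    proof -
      have "j \<le> 2^i" using jj n(2) by simp
      then have "real j \<le> real (2^i)" by (rule of_nat_mono)
      then show ?thesis by simp
    qed
    finally show "(U j w)^2 = Y i j w" by (simp add: Y_eq)
  qed
  also have "\<dots> \<le> Z i w" unfolding Z_def
    by (rule sum_mono2) (use n in \<open>auto simp: Y0\<close>)
  finally show ?thesis by simp
qed

lemma avg_bound: "AE w in M. \<exists>B. \<forall>n\<ge>1. (\<Sum>j=1..n. (U j w)^2) \<le> B * real n"
  using BC1 BC2
proof (eventually_elim)
  case (elim w)
  define K where "K = C * m2 + 1"
  have K1: "1 \<le> K" unfolding K_def using C0 m2_nn by simp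
  obtain i0 where i0: "\<And>i. i \<ge> i0 \<Longrightarrow> Z i w \<le> 2^i * K" using elim(1) unfolding K_def by blast
  obtain j0 where j01: "1 \<le> j0" and j0: "\<forall>j\<ge>j0. (U j w)^2 \<le> real j" using elim(2) by blast
  define n0 where "n0 = max (2^i0) j0"
  define S0 where "S0 = (\<Sum>j=1..n0. (U j w)^2)"
  have S00: "0 \<le> S0" unfolding S0_def by (simp add: sum_nonneg)
  have "(\<Sum>j=1..n. (U j w)^2) \<le> (S0 + 2 * K) * real n" if n1: "1 \<le> n" for n
  proof -
  have Sn: "S0 \<le> S0 * real n"
  proof -
    have "S0 * 1 \<le> S0 * real n" by (rule mult_left_mono) (use S00 n1 in auto)
    then show ?thesis by simp
  qed
  show ?thesis
  proof (cases "n \<le> n0")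
    case True
    have "(\<Sum>j=1..n. (U j w)^2) \<le> S0" unfolding S0_def
      by (rule sum_mono2) (use True in auto)
    also have "\<dots> \<le> S0 * real n" by (rule Sn)
    also have "\<dots> \<le> (S0 + 2 * K) * real n" using K1 by (intro mult_right_mono) auto
    finally show ?thesis .
  next
    case False
    define i where "i = (LEAST i. n \<le> 2^i)"
    have ex: "n \<le> 2^n" for n :: nat
    proof (induction n)
      case 0 show ?case by simp
    next
      case (Suc n)
      have a: "1 \<le> (2::nat)^n" by simp
      have "Suc n \<le> 2 * 2^n" using Suc.IH a by linarith
      then show ?case by simp
    qed
    have ni: "n \<le> 2^i" unfolding i_def by (rule LeastI[of "\<lambda>i. n \<le> 2^i", OF ex[of n]])
    have ipos: "i \<noteq> 0"
    proof
      assume "i = 0"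
      then have "n \<le> 1" using ni by simp
      moreover have "1 \<le> n0" unfolding n0_def using j01 by simp
      ultimately show False using False by simp
    qed
    have lt: "2^(i-1) < n"
    proof (rule ccontr)
      assume "\<not> 2^(i-1) < n"
      then have "n \<le> 2^(i-1)" by simp
      then have "i \<le> i - 1" unfolding i_def by (rule Least_le)
      then show False using ipos by simp
    qed
    have i2n: "(2::real)^i \<le> 2 * real n"
    proof -
      have "(2::nat)^i = 2 * 2^(i-1)" using ipos by (cases i) auto
      then have "(2::nat)^i \<le> 2 * n" using lt by simp
      then have "real ((2::nat)^i) \<le> real (2 * n)" by (rule of_nat_mono)
      then show ?thesis by simp
    qed
    have ii0: "i \<ge> i0"
    proof (rule ccontr)
      assume "\<not> i \<ge> i0"
      then have a: "(2::nat)^i \<le> 2^i0" by (intro power_increasing) auto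
      have b: "2^i0 \<le> n0" unfolding n0_def by simp
      show False using a b ni False by linarith
    qed
    have jn: "j0 \<le> n" using False unfolding n0_def by simp
    have "(\<Sum>j=1..n. (U j w)^2) \<le> (\<Sum>j=1..j0. (U j w)^2) + Z i w"
      by (rule split_bound[OF j0 jn ni])
    also have "(\<Sum>j=1..j0. (U j w)^2) \<le> S0" unfolding S0_def
      by (rule sum_mono2) (auto simp: n0_def)
    also have "Z i w \<le> 2^i * K" by (rule i0[OF ii0])
    also have "2^i * K \<le> (2 * real n) * K" using K1 i2n by (intro mult_right_mono) auto
    also have "S0 + 2 * real n * K \<le> (S0 + 2 * K) * real n"
      using Sn by (simp add: algebra_simps)
    finally show ?thesis by simp
  qed
  qed
  then show ?case by blast
qed

end

lemma det_main:
  fixes x e y :: "nat \<Rightarrow> 'a \<Rightarrow> real" and w :: 'a and \<beta> B :: real and n0 :: nat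
  assumes model: "\<And>k. y k w = \<beta> * x k w + e k w"
    and Sb: "\<And>n. 1 \<le> n \<Longrightarrow> (\<Sum>j=1..n. (e j w)^2) \<le> B * real n"
    and n0: "1 \<le> n0" "Sxx x n0 w \<noteq> 0"
    and gr: "(\<lambda>n. inverse (Sxx x n w)) \<in> o(\<lambda>n. inverse (real n))"
  shows "(\<lambda>n. gamma_hat x y n w) \<longlonglongrightarrow> \<beta>"
proof -
  define s where "s n = Sxx x n w" for n
  define q where "q n = (\<Sum>j=1..n. x j w * e j w)" for n
  define S where "S n = (\<Sum>j=1..n. (e j w)^2)" for n
  have s_nn: "0 \<le> s n" for n unfolding s_def Sxx_def by (simp add: sum_nonneg)
  have s_mono: "s m \<le> s n" if "m \<le> n" for m n
    unfolding s_def Sxx_def by (rule sum_mono2) (use that in auto)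
  have spos: "0 < s n" if "n0 \<le> n" for n
  proof -
    have "0 < s n0" using n0(2) s_nn[of n0] unfolding s_def by simp
    then show ?thesis using s_mono[OF that] by simp
  qed
  have B0: "0 \<le> B" using Sb[of 1] by (simp add: order_trans[OF zero_le_power2])
  have evn: "eventually (\<lambda>n. max n0 1 \<le> n) sequentially" by (rule eventually_ge_at_top)
  have r0: "(\<lambda>n. real n / s n) \<longlonglongrightarrow> 0"
  proof (rule tendstoI)
    fix \<epsilon> :: real assume ep: "0 < \<epsilon>"
    have "eventually (\<lambda>n. norm (inverse (Sxx x n w)) \<le> (\<epsilon>/2) * norm (inverse (real n))) sequentially"
      by (rule landau_o.smallD[OF gr]) (use ep in simp)
    then show "eventually (\<lambda>n. dist (real n / s n) 0 < \<epsilon>) sequentially"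
      using evn
    proof eventually_elim
      case (elim n)
      have sp: "0 < s n" using spos elim(2) by simp
      have n1: "1 \<le> n" using elim(2) by simp
      have "norm (inverse (s n)) \<le> (\<epsilon>/2) * norm (inverse (real n))"
        using elim(1) unfolding s_def .
      moreover have "norm (inverse (s n)) = inverse (s n)" using sp by simp
      moreover have "norm (inverse (real n)) = inverse (real n)" by simp
      ultimately have "inverse (s n) \<le> (\<epsilon>/2) * inverse (real n)" by simp
      then have "real n * inverse (s n) \<le> real n * ((\<epsilon>/2) * inverse (real n))"
        by (rule mult_left_mono) simp
      also have "\<dots> = \<epsilon>/2" using n1 by simp
      finally have "real n / s n \<le> \<epsilon>/2" by (simp only: divide_inverse)
      moreover have "0 \<le> real n / s n" using sp by simp
      ultimately have "\<bar>real n / s n\<bar> < \<epsilon>" using ep by linarith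
      then show ?case by (simp add: dist_real_def)
    qed
  qed
  have inv0: "(\<lambda>n. 1 / s n) \<longlonglongrightarrow> 0"
  proof (rule Lim_null_comparison[OF _ r0])
    show "eventually (\<lambda>n. norm (1 / s n) \<le> real n / s n) sequentially"
      using evn
    proof eventually_elim
      case (elim n)
      then have "0 < s n" "1 \<le> n" using spos by auto
      then show ?case by (simp add: divide_right_mono)
    qed
  qed
  have qs0: "(\<lambda>n. q n / s n) \<longlonglongrightarrow> 0"
  proof (rule Lim_null_comparison)
    show "(\<lambda>n. sqrt (B * (real n / s n))) \<longlonglongrightarrow> 0"
      using tendsto_real_sqrt[OF tendsto_mult_right_zero[OF r0, of B]] by simp
    show "eventually (\<lambda>n. norm (q n / s n) \<le> sqrt (B * (real n / s n))) sequentially"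
      using evn
    proof eventually_elim
      case (elim n)
      then have sp: "0 < s n" and n1: "1 \<le> n" using spos by auto
      have cs: "(q n)^2 \<le> s n * S n"
        unfolding q_def s_def S_def Sxx_def by (rule Cauchy_Schwarz_ineq_sum)
      have "(q n / s n)^2 = (q n)^2 / (s n)^2" by (simp add: power_divide)
      also have "\<dots> \<le> s n * S n / (s n)^2" using cs sp by (simp add: divide_right_mono)
      also have "\<dots> = S n / s n" using sp by (simp add: power2_eq_square)
      also have "\<dots> \<le> B * real n / s n" using Sb[OF n1] sp unfolding S_def by (simp add: divide_right_mono)
      finally have "(q n / s n)^2 \<le> B * (real n / s n)" by simp
      then have "sqrt ((q n / s n)^2) \<le> sqrt (B * (real n / s n))" by (rule real_sqrt_le_mono)
      then show ?case by simp
    qed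
  qed
  have sxy: "Sxy x y n w = \<beta> * s n + q n" for n
    unfolding Sxy_def s_def Sxx_def q_def model
    by (simp add: algebra_simps sum.distrib sum_distrib_left power2_eq_square)
  have bh: "beta_hat x y n w = \<beta> + q n / s n" if "n0 \<le> n" for n
  proof -
    have "s n \<noteq> 0" using spos[OF that] by simp
    then show ?thesis unfolding beta_hat_def sxy s_def[symmetric] by (simp add: field_simps)
  qed
  have rss: "(\<Sum>j=1..n. (y j w - x j w * beta_hat x y n w)^2) = S n - (q n)^2 / s n" if "n0 \<le> n" for n
  proof -
    define c where "c = q n / s n"
    have sp: "0 < s n" using spos[OF that] .
    have "(\<Sum>j=1..n. (y j w - x j w * beta_hat x y n w)^2) = (\<Sum>j=1..n. (e j w - c * x j w)^2)"
      unfolding bh[OF that] model c_def by (intro sum.cong refl) (simp add: algebra_simps)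
    also have "\<dots> = (\<Sum>j=1..n. (e j w)^2 - 2 * c * (x j w * e j w) + c^2 * (x j w)^2)"
      by (intro sum.cong refl) (simp add: power2_eq_square algebra_simps)
    also have "\<dots> = S n - 2 * c * q n + c^2 * s n"
      unfolding S_def q_def s_def Sxx_def by (simp add: sum.distrib sum_subtractf sum_distrib_left)
    also have "\<dots> = S n - (q n)^2 / s n"
      unfolding c_def using sp by (simp add: field_simps power2_eq_square)
    finally show ?thesis .
  qed
  have sig: "0 \<le> sigma2_hat x y n w \<and> sigma2_hat x y n w \<le> 2 * B" if "max n0 2 \<le> n" for n
  proof -
    have nn0: "n0 \<le> n" and n2: "2 \<le> n" using that by auto
    have sp: "0 < s n" using spos[OF nn0] .
    define R where "R = (\<Sum>j=1..n. (y j w - x j w * beta_hat x y n w)^2)"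
    have R0: "0 \<le> R" unfolding R_def by (simp add: sum_nonneg)
    have RS: "R \<le> B * real n"
    proof -
      have "R = S n - (q n)^2 / s n" unfolding R_def by (rule rss[OF nn0])
      also have "\<dots> \<le> S n" using sp by simp
      also have "\<dots> \<le> B * real n" unfolding S_def using Sb n2 by simp
      finally show ?thesis .
    qed
    have d: "0 < real n - 1" using n2 by simp
    have e: "sigma2_hat x y n w = R / (real n - 1)" unfolding sigma2_hat_def R_def ..
    have "R / (real n - 1) \<le> B * real n / (real n - 1)" using RS d by (simp add: divide_right_mono)
    also have "\<dots> \<le> 2 * B"
    proof -
      have "B * real n \<le> 2 * B * (real n - 1)" using B0 n2 by (simp add: algebra_simps mult_left_mono)
      then show ?thesis using d by (simp add: divide_le_eq)
    qed
    finally show ?thesis unfolding e using R0 d by simp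
  qed
  define \<kappa> where "\<kappa> n = sigma2_hat x y n w / (beta_hat x y n w)^2" for n
  have ga: "gamma_hat x y n w = inverse (s n + \<kappa> n) * (\<beta> * s n + q n)" for n
    unfolding gamma_hat_def \<kappa>_def Let_def sxy s_def ..
  have k0: "0 \<le> \<kappa> n" if "max n0 2 \<le> n" for n
    unfolding \<kappa>_def using sig[OF that] by simp
  have evn2: "eventually (\<lambda>n. max n0 2 \<le> n) sequentially" by (rule eventually_ge_at_top)
  show ?thesis
  proof (cases "\<beta> = 0")
    case True
    have "(\<lambda>n. gamma_hat x y n w) \<longlonglongrightarrow> 0"
    proof (rule Lim_null_comparison[OF _ tendsto_rabs_zero[OF qs0]])
      show "eventually (\<lambda>n. norm (gamma_hat x y n w) \<le> \<bar>q n / s n\<bar>) sequentially"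
        using evn2
      proof eventually_elim
        case (elim n)
        have sp: "0 < s n" using spos elim by simp
        have kk: "0 \<le> \<kappa> n" using k0 elim by simp
        have "norm (gamma_hat x y n w) = \<bar>q n\<bar> / (s n + \<kappa> n)"
          unfolding ga True using sp kk by (simp add: abs_mult divide_inverse)
        also have "\<dots> \<le> \<bar>q n\<bar> / s n" using sp kk by (intro divide_left_mono) auto
        finally show ?case by (simp add: abs_div abs_of_pos sp)
      qed
    qed
    then show ?thesis using True by simp
  next
    case False
    define K where "K = 8 * B / \<beta>^2"
    have K0: "0 \<le> K" unfolding K_def using B0 by simp
    define h where "h n = \<kappa> n / (s n + \<kappa> n)" for n
    have evq: "eventually (\<lambda>n. \<bar>q n / s n\<bar> < \<bar>\<beta>\<bar> / 2) sequentially"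
    proof -
      have "eventually (\<lambda>n. dist (q n / s n) 0 < \<bar>\<beta>\<bar> / 2) sequentially"
        by (rule tendstoD[OF qs0]) (use False in simp)
      then show ?thesis by (simp add: dist_real_def)
    qed
    have h0: "h \<longlonglongrightarrow> 0"
    proof (rule Lim_null_comparison)
      show "(\<lambda>n. K * (1 / s n)) \<longlonglongrightarrow> 0" by (rule tendsto_mult_right_zero[OF inv0])
      show "eventually (\<lambda>n. norm (h n) \<le> K * (1 / s n)) sequentially"
        using evn2 evq
      proof eventually_elim
        case (elim n)
        have nn0: "n0 \<le> n" using elim by simp
        have sp: "0 < s n" using spos nn0 by simp
        have kk: "0 \<le> \<kappa> n" using k0 elim by simp
        have bhn: "beta_hat x y n w = \<beta> + q n / s n" by (rule bh[OF nn0])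
        have "\<bar>\<beta>\<bar> / 2 \<le> \<bar>beta_hat x y n w\<bar>" using elim(2) unfolding bhn by linarith
        then have "(\<bar>\<beta>\<bar> / 2)^2 \<le> \<bar>beta_hat x y n w\<bar>^2" by (rule power_mono) simp
        then have bb: "\<beta>^2 / 4 \<le> (beta_hat x y n w)^2" by (simp add: power_divide)
        have bpos: "0 < \<beta>^2 / 4" using False by simp
        have sg: "sigma2_hat x y n w \<le> 2 * B" "0 \<le> sigma2_hat x y n w" using sig elim by auto
        have "\<kappa> n \<le> 2 * B / (\<beta>^2 / 4)"
          unfolding \<kappa>_def using sg bb bpos B0
          by (intro frac_le) auto
        also have "\<dots> = K" unfolding K_def by simp
        finally have kK: "\<kappa> n \<le> K" .
        have "norm (h n) = \<kappa> n / (s n + \<kappa> n)" unfolding h_def using sp kk by simp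
        also have "\<dots> \<le> \<kappa> n / s n" using sp kk by (intro divide_left_mono) auto
        also have "\<dots> \<le> K / s n" using kK sp by (simp add: divide_right_mono)
        finally show ?case by simp
      qed
    qed
    have lim: "(\<lambda>n. (\<beta> + q n / s n) * (1 - h n)) \<longlonglongrightarrow> (\<beta> + 0) * (1 - 0)"
      by (intro tendsto_intros qs0 h0)
    have eq: "eventually (\<lambda>n. (\<beta> + q n / s n) * (1 - h n) = gamma_hat x y n w) sequentially"
      using evn2
    proof eventually_elim
      case (elim n)
      have sp: "0 < s n" using spos elim by simp
      have kk: "0 \<le> \<kappa> n" using k0 elim by simp
      have d: "0 < s n + \<kappa> n" using sp kk by simp
      have a: "1 - h n = s n / (s n + \<kappa> n)" unfolding h_def using d by (simp add: field_simps)
      have b: "(\<beta> + q n / s n) * (s n / (s n + \<kappa> n)) = (\<beta> * s n + q n) / (s n + \<kappa> n)"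
      proof -
        have c: "(\<beta> + q n / s n) * s n = \<beta> * s n + q n" using sp by (simp add: distrib_right)
        have "(\<beta> + q n / s n) * (s n / (s n + \<kappa> n)) = ((\<beta> + q n / s n) * s n) / (s n + \<kappa> n)"
          by (rule times_divide_eq_right)
        then show ?thesis unfolding c .
      qed
      show ?case unfolding a b ga by (simp add: divide_inverse mult.commute)
    qed
    show ?thesis using Lim_transform_eventually[OF lim eq] by simp
  qed
qed

theorem theorem6:
  fixes M :: "'a measure"
    and x e y :: "nat \<Rightarrow> 'a \<Rightarrow> real"
    and \<epsilon> :: "'a \<Rightarrow> real"
    and \<beta> :: real
  assumes "prob_space M"
    and x_rv: "\<And>k. x k \<in> borel_measurable M"
    and e_rv: "\<And>k. e k \<in> borel_measurable M"
    and eps_rv: "\<epsilon> \<in> borel_measurable M"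
    and model: "\<And>k w. y k w = \<beta> * x k w + e k w"
    and PQD: "pairwise_PQD M e"
    and dom: "stoch_dominated M e \<epsilon>"
    and second_moment: "integrable M (\<lambda>w. (\<epsilon> w)\<^sup>2)"
    and covsum: "(\<Sum>j. \<Sum>k\<in>{1..<j}.
        \<integral>\<^sup>+ t\<in>{real j..}. ennreal (t powr (-2) *
          (Gfun M (\<lambda>w. pos_part (e k w)) (\<lambda>w. pos_part (e j w)) (sqrt t)
           + Gfun M (\<lambda>w. neg_part (e k w)) (\<lambda>w. neg_part (e j w)) (sqrt t))) \<partial>lborel) < \<infinity>"
    and nonzero: "\<exists>n\<ge>1. AE w in M. Sxx x n w \<noteq> 0"
    and growth: "AE w in M. (\<lambda>n. inverse (Sxx x n w)) \<in> o(\<lambda>n. inverse (real n))"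
  shows "AE w in M. (\<lambda>n. gamma_hat x y n w) \<longlonglongrightarrow> \<beta>"
proof -
  interpret P: prob_space M by fact
  note Mp = \<open>prob_space M\<close>
  have em[measurable]: "\<And>k. e k \<in> borel_measurable M" by (rule e_rv)
  have epsm[measurable]: "\<epsilon> \<in> borel_measurable M" by (rule eps_rv)
  obtain C where C0: "C > 0" and Cd: "\<And>n t. 1 \<le> n \<Longrightarrow> t > 0 \<Longrightarrow>
      measure M {w \<in> space M. \<bar>e n w\<bar> > t} \<le> C * measure M {w \<in> space M. \<bar>\<epsilon> w\<bar> > t}"
    using dom unfolding stoch_dominated_def by blast
  define V where "V w = \<bar>\<epsilon> w\<bar>" for w
  have Vm: "V \<in> borel_measurable M" unfolding V_def[abs_def] using eps_rv by measurable
  have V0: "\<And>w. 0 \<le> V w" unfolding V_def by simp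
  have Vi: "integrable M (\<lambda>w. (V w)^2)" unfolding V_def using second_moment by simp
  have pp: "pqd_pair M (e k) (e j)" if "1 \<le> k" "k < j" for k j
    using PQD that unfolding pairwise_PQD_def
    by (intro pqd_pair.intro Mp e_rv) auto
  have dpos: "measure M {w\<in>space M. pos_part (e j w) > t} \<le> C * measure M {w\<in>space M. V w > t}"
    if "1 \<le> j" "0 < t" for j t
  proof -
    have "measure M {w\<in>space M. pos_part (e j w) > t} \<le> measure M {w\<in>space M. \<bar>e j w\<bar> > t}"
      by (rule P.finite_measure_mono) (force simp: pos_part_def, measurable)
    also have "\<dots> \<le> C * measure M {w\<in>space M. V w > t}" unfolding V_def by (rule Cd[OF that])
    finally show ?thesis .
  qed
  have dneg: "measure M {w\<in>space M. neg_part (e j w) > t} \<le> C * measure M {w\<in>space M. V w > t}"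
    if "1 \<le> j" "0 < t" for j t
  proof -
    have "measure M {w\<in>space M. neg_part (e j w) > t} \<le> measure M {w\<in>space M. \<bar>e j w\<bar> > t}"
      by (rule P.finite_measure_mono) (force simp: neg_part_def, measurable)
    also have "\<dots> \<le> C * measure M {w\<in>space M. V w > t}" unfolding V_def by (rule Cd[OF that])
    finally show ?thesis .
  qed
  define F where "F j k = (\<integral>\<^sup>+ t\<in>{real j..}. ennreal (t powr (-2) *
          (Gfun M (\<lambda>w. pos_part (e k w)) (\<lambda>w. pos_part (e j w)) (sqrt t)
           + Gfun M (\<lambda>w. neg_part (e k w)) (\<lambda>w. neg_part (e j w)) (sqrt t))) \<partial>lborel)" for j k
  have Ffin: "(\<Sum>j. \<Sum>k\<in>{1..<j}. F j k) < \<infinity>" using covsum unfolding F_def .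
  have cov_part: "(\<Sum>j. \<Sum>k\<in>{1..<j}. \<integral>\<^sup>+ t\<in>{real j..}. ennreal (t powr (-2) * Cov M (\<lambda>w. min (P k w) (sqrt t)) (\<lambda>w. min (P j w) (sqrt t))) \<partial>lborel) < \<infinity>"
    if PQ: "\<And>k j t. 1 \<le> k \<Longrightarrow> k < j \<Longrightarrow> real j \<le> t \<Longrightarrow>
         Cov M (\<lambda>w. min (P k w) (sqrt t)) (\<lambda>w. min (P j w) (sqrt t))
         \<le> Gfun M (\<lambda>w. pos_part (e k w)) (\<lambda>w. pos_part (e j w)) (sqrt t)
           + Gfun M (\<lambda>w. neg_part (e k w)) (\<lambda>w. neg_part (e j w)) (sqrt t)" for P
  proof -
    have "(\<Sum>j. \<Sum>k\<in>{1..<j}. \<integral>\<^sup>+ t\<in>{real j..}. ennreal (t powr (-2) * Cov M (\<lambda>w. min (P k w) (sqrt t)) (\<lambda>w. min (P j w) (sqrt t))) \<partial>lborel)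
        \<le> (\<Sum>j. \<Sum>k\<in>{1..<j}. F j k)"
    proof (rule suminf_le[OF _ summableI summableI], rule sum_mono)
      fix j k :: nat assume k: "k \<in> {1..<j}"
      show "(\<integral>\<^sup>+ t\<in>{real j..}. ennreal (t powr (-2) * Cov M (\<lambda>w. min (P k w) (sqrt t)) (\<lambda>w. min (P j w) (sqrt t))) \<partial>lborel) \<le> F j k"
        unfolding F_def
      proof (rule nn_integral_mono)
        fix t
        show "ennreal (t powr (-2) * Cov M (\<lambda>w. min (P k w) (sqrt t)) (\<lambda>w. min (P j w) (sqrt t))) * indicator {real j..} t
          \<le> ennreal (t powr (-2) * (Gfun M (\<lambda>w. pos_part (e k w)) (\<lambda>w. pos_part (e j w)) (sqrt t)
           + Gfun M (\<lambda>w. neg_part (e k w)) (\<lambda>w. neg_part (e j w)) (sqrt t))) * indicator {real j..} t"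
        proof (cases "real j \<le> t")
          case True
          have "t powr (-2) * Cov M (\<lambda>w. min (P k w) (sqrt t)) (\<lambda>w. min (P j w) (sqrt t))
            \<le> t powr (-2) * (Gfun M (\<lambda>w. pos_part (e k w)) (\<lambda>w. pos_part (e j w)) (sqrt t)
           + Gfun M (\<lambda>w. neg_part (e k w)) (\<lambda>w. neg_part (e j w)) (sqrt t))"
            using PQ[of k j t] k True by (intro mult_left_mono) auto
          then show ?thesis using True by (simp add: ennreal_leI)
        next
          case False
          then show ?thesis by simp
        qed
      qed
    qed
    then show ?thesis using Ffin by (simp add: le_less_trans)
  qed
  have Gp: "Gfun M (\<lambda>w. pos_part (e k w)) (\<lambda>w. pos_part (e j w)) T
      = Cov M (\<lambda>w. min (pos_part (e k w)) T) (\<lambda>w. min (pos_part (e j w)) T)"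
    and Gn: "Gfun M (\<lambda>w. neg_part (e k w)) (\<lambda>w. neg_part (e j w)) T
      = Cov M (\<lambda>w. min (neg_part (e k w)) T) (\<lambda>w. min (neg_part (e j w)) T)"
    if "0 \<le> T" for k j T using Gfun_pos[OF that] Gfun_neg[OF that] by auto
  have sp: "sqset M (\<lambda>j w. pos_part (e j w)) V C"
  proof (unfold_locales)
    show "1 \<le> j \<Longrightarrow> 0 < t \<Longrightarrow> measure M {w\<in>space M. pos_part (e j w) > t} \<le> C * measure M {w\<in>space M. V w > t}" for j t
      by (rule dpos)
    show "1 \<le> k \<Longrightarrow> k < j \<Longrightarrow> 0 \<le> T \<Longrightarrow>
       Cov M (\<lambda>w. (min (pos_part (e k w)) T)^2) (\<lambda>w. (min (pos_part (e j w)) T)^2)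
        \<le> 4 * T^2 * Cov M (\<lambda>w. min (pos_part (e k w)) T) (\<lambda>w. min (pos_part (e j w)) T)" for k j T
      using pqd_pair.pos_hb(1)[OF pp] by blast
    show "1 \<le> k \<Longrightarrow> k < j \<Longrightarrow> 0 \<le> T \<Longrightarrow> T \<le> T' \<Longrightarrow>
       Cov M (\<lambda>w. min (pos_part (e k w)) T) (\<lambda>w. min (pos_part (e j w)) T)
        \<le> Cov M (\<lambda>w. min (pos_part (e k w)) T') (\<lambda>w. min (pos_part (e j w)) T')" for k j T T'
      using pqd_pair.pos_hb(2)[OF pp] by blast
    show "1 \<le> k \<Longrightarrow> k < j \<Longrightarrow> 0 \<le> T \<Longrightarrow> 0 \<le> Cov M (\<lambda>w. min (pos_part (e k w)) T) (\<lambda>w. min (pos_part (e j w)) T)" for k j T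
      using pqd_pair.pos_hb(3)[OF pp] by blast
    show "(\<Sum>j. \<Sum>k\<in>{1..<j}. \<integral>\<^sup>+ t\<in>{real j..}. ennreal (t powr (-2) *
          Cov M (\<lambda>w. min (pos_part (e k w)) (sqrt t)) (\<lambda>w. min (pos_part (e j w)) (sqrt t))) \<partial>lborel) < \<infinity>"
    proof (rule cov_part)
      fix k j :: nat and t :: real assume h: "1 \<le> k" "k < j" "real j \<le> t"
      have t0: "0 \<le> sqrt t" using h by simp
      have "0 \<le> Gfun M (\<lambda>w. neg_part (e k w)) (\<lambda>w. neg_part (e j w)) (sqrt t)"
        unfolding Gn[OF t0] using pqd_pair.neg_hb(3)[OF pp[OF h(1,2)] t0] .
      then show "Cov M (\<lambda>w. min (pos_part (e k w)) (sqrt t)) (\<lambda>w. min (pos_part (e j w)) (sqrt t))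
         \<le> Gfun M (\<lambda>w. pos_part (e k w)) (\<lambda>w. pos_part (e j w)) (sqrt t)
           + Gfun M (\<lambda>w. neg_part (e k w)) (\<lambda>w. neg_part (e j w)) (sqrt t)"
        unfolding Gp[OF t0] by simp
    qed
  qed (use Mp Vm V0 Vi C0 in \<open>auto intro: pos_part_nn\<close>)
  have sn: "sqset M (\<lambda>j w. neg_part (e j w)) V C"
  proof (unfold_locales)
    show "1 \<le> j \<Longrightarrow> 0 < t \<Longrightarrow> measure M {w\<in>space M. neg_part (e j w) > t} \<le> C * measure M {w\<in>space M. V w > t}" for j t
      by (rule dneg)
    show "1 \<le> k \<Longrightarrow> k < j \<Longrightarrow> 0 \<le> T \<Longrightarrow>
       Cov M (\<lambda>w. (min (neg_part (e k w)) T)^2) (\<lambda>w. (min (neg_part (e j w)) T)^2)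
        \<le> 4 * T^2 * Cov M (\<lambda>w. min (neg_part (e k w)) T) (\<lambda>w. min (neg_part (e j w)) T)" for k j T
      using pqd_pair.neg_hb(1)[OF pp] by blast
    show "1 \<le> k \<Longrightarrow> k < j \<Longrightarrow> 0 \<le> T \<Longrightarrow> T \<le> T' \<Longrightarrow>
       Cov M (\<lambda>w. min (neg_part (e k w)) T) (\<lambda>w. min (neg_part (e j w)) T)
        \<le> Cov M (\<lambda>w. min (neg_part (e k w)) T') (\<lambda>w. min (neg_part (e j w)) T')" for k j T T'
      using pqd_pair.neg_hb(2)[OF pp] by blast
    show "1 \<le> k \<Longrightarrow> k < j \<Longrightarrow> 0 \<le> T \<Longrightarrow> 0 \<le> Cov M (\<lambda>w. min (neg_part (e k w)) T) (\<lambda>w. min (neg_part (e j w)) T)" for k j T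
      using pqd_pair.neg_hb(3)[OF pp] by blast
    show "(\<Sum>j. \<Sum>k\<in>{1..<j}. \<integral>\<^sup>+ t\<in>{real j..}. ennreal (t powr (-2) *
          Cov M (\<lambda>w. min (neg_part (e k w)) (sqrt t)) (\<lambda>w. min (neg_part (e j w)) (sqrt t))) \<partial>lborel) < \<infinity>"
    proof (rule cov_part)
      fix k j :: nat and t :: real assume h: "1 \<le> k" "k < j" "real j \<le> t"
      have t0: "0 \<le> sqrt t" using h by simp
      have "0 \<le> Gfun M (\<lambda>w. pos_part (e k w)) (\<lambda>w. pos_part (e j w)) (sqrt t)"
        unfolding Gp[OF t0] using pqd_pair.pos_hb(3)[OF pp[OF h(1,2)] t0] .
      then show "Cov M (\<lambda>w. min (neg_part (e k w)) (sqrt t)) (\<lambda>w. min (neg_part (e j w)) (sqrt t))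
         \<le> Gfun M (\<lambda>w. pos_part (e k w)) (\<lambda>w. pos_part (e j w)) (sqrt t)
           + Gfun M (\<lambda>w. neg_part (e k w)) (\<lambda>w. neg_part (e j w)) (sqrt t)"
        unfolding Gn[OF t0] by simp
    qed
  qed (use Mp Vm V0 Vi C0 in \<open>auto intro: neg_part_nn\<close>)
  have sq: "AE w in M. \<exists>B. \<forall>n\<ge>1. (\<Sum>j=1..n. (e j w)^2) \<le> B * real n"
    using sqset.avg_bound[OF sp] sqset.avg_bound[OF sn]
  proof eventually_elim
    case (elim w)
    obtain B1 where B1: "\<forall>n\<ge>1. (\<Sum>j=1..n. (pos_part (e j w))^2) \<le> B1 * real n" using elim(1) by blast
    obtain B2 where B2: "\<forall>n\<ge>1. (\<Sum>j=1..n. (neg_part (e j w))^2) \<le> B2 * real n" using elim(2) by blast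
    have pn: "(z::real)^2 = (pos_part z)^2 + (neg_part z)^2" for z
      unfolding pos_part_def neg_part_def by (cases "0 \<le> z") (auto simp: max_def)
    have "(\<Sum>j=1..n. (e j w)^2) \<le> (B1 + B2) * real n" if "1 \<le> n" for n
    proof -
      have "(\<Sum>j=1..n. (e j w)^2) = (\<Sum>j=1..n. (pos_part (e j w))^2) + (\<Sum>j=1..n. (neg_part (e j w))^2)"
        by (subst pn) (simp add: sum.distrib)
      also have "\<dots> \<le> B1 * real n + B2 * real n" using B1 B2 that by (intro add_mono) auto
      finally show ?thesis by (simp add: algebra_simps)
    qed
    then show ?case by blast
  qed
  obtain n0 where n0: "1 \<le> n0" "AE w in M. Sxx x n0 w \<noteq> 0" using nonzero by blast
  show ?thesis
    using sq n0(2) growth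
  proof eventually_elim
    case (elim w)
    obtain B where B: "\<forall>n\<ge>1. (\<Sum>j=1..n. (e j w)^2) \<le> B * real n" using elim(1) by blast
    show ?case
      by (rule det_main[where e=e and B=B and ?n0.0=n0]) (use model B n0(1) elim(2,3) in auto)
  qed
qed

end
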